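(* Consider the system of ordinary differential equations \[ \dot u=r_{1}u(1-u)-a_{12}uv-a_{13}uw,\qquad \dot v=r_{2}v(1-v)+a_{21}uv,\qquad \dot w=-\mu w+a_{31}uw, \] with all parameters positive, and its equilibria $E_0=(0,0,0)$, $E_1=(1,0,0)$, $E_2=(0,1,0)$, $E_{12}=(u^*_{12},v^*_{12},0)$ with $u^*_{12}=\frac{r_{2}(r_{1}-a_{12})}{r_{1}r_{2}+a_{12}a_{21}}$, $v^*_{12}=\frac{r_{1}r_{2}+r_{1}a_{21}}{r_{1}r_{2}+a_{12}a_{21}}$, $E_{13}=\left(\frac{\mu}{a_{31}},0,\frac{r_{1}(a_{31}-\mu)}{a_{13}a_{31}}\right)$, and $E_{*}=\left(\frac{\mu}{a_{31}},\,1+\frac{a_{21}\mu}{a_{31}r_{2}},\,\frac{r_{1}r_{2}a_{31}-r_{1}r_{2}\mu-a_{12}a_{31}r_{2}-a_{12}a_{21}\mu}{a_{13}a_{31}r_{2}}\right)$. Then: (i) $E_0$ is unstable. (ii) $E_1$ is unstable. (iii) If $r_1\le a_{12}$, then $E_2$ is globally asymptotically stable (attracting every solution with positive initial data). (iv) If $r_1>a_{12}$ and $\mu>a_{31}u^*_{12}$, then $E_{12}$ is (locally asymptotically) stable. (v) If $a_{31}>\mu$, then $E_{13}$ is unstable. (vi) If $r_{1}r_{2}a_{31}-r_{1}r_{2}\mu-a_{12}a_{31}r_{2}-a_{12}a_{21}\mu>0$, then the positive equilibrium $E_*$ exists and is (locally asymptotically) stable.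
   Context: Solutions are considered in the nonnegative orthant. $E_{12}$ lies in the nonnegative orthant exactly when $r_1>a_{12}$, and $E_{13}$ when $a_{31}>\mu$. *)

theory Defs
  imports "HOL-Analysis.Analysis"
begin

type_synonym state = "real \<times> real \<times> real"

definition field :: "real \<Rightarrow> real \<Rightarrow> real \<Rightarrow> real \<Rightarrow> real \<Rightarrow> real \<Rightarrow> real \<Rightarrow> state \<Rightarrow> state" where
  "field r1 r2 a12 a13 a21 a31 mu = (\<lambda>(u, v, w).
     (r1 * u * (1 - u) - a12 * u * v - a13 * u * w,
      r2 * v * (1 - v) + a21 * u * v,
      - mu * w + a31 * u * w))"

definition orthant :: "state set" where
  "orthant = {(u, v, w). u \<ge> 0 \<and> v \<ge> 0 \<and> w \<ge> 0}"

definition pos_orthant :: "state set" where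
  "pos_orthant = {(u, v, w). u > 0 \<and> v > 0 \<and> w > 0}"

definition ode_solution :: "(state \<Rightarrow> state) \<Rightarrow> (real \<Rightarrow> state) \<Rightarrow> bool" where
  "ode_solution F x \<longleftrightarrow> (\<forall>t\<ge>0. (x has_vector_derivative F (x t)) (at t within {0..}))"

definition is_equilibrium :: "(state \<Rightarrow> state) \<Rightarrow> state \<Rightarrow> bool" where
  "is_equilibrium F e \<longleftrightarrow> F e = 0"

definition stable_in :: "(state \<Rightarrow> state) \<Rightarrow> state set \<Rightarrow> state \<Rightarrow> bool" where
  "stable_in F D e \<longleftrightarrow>
     (\<forall>\<epsilon>>0. \<exists>\<delta>>0. \<forall>x. ode_solution F x \<and> x 0 \<in> D \<and> dist (x 0) e < \<delta> \<longrightarrow>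
        (\<forall>t\<ge>0. dist (x t) e < \<epsilon>))"

definition unstable_in :: "(state \<Rightarrow> state) \<Rightarrow> state set \<Rightarrow> state \<Rightarrow> bool" where
  "unstable_in F D e \<longleftrightarrow> \<not> stable_in F D e"

definition loc_asym_stable_in :: "(state \<Rightarrow> state) \<Rightarrow> state set \<Rightarrow> state \<Rightarrow> bool" where
  "loc_asym_stable_in F D e \<longleftrightarrow> stable_in F D e \<and>
     (\<exists>\<eta>>0. \<forall>x. ode_solution F x \<and> x 0 \<in> D \<and> dist (x 0) e < \<eta> \<longrightarrow> (x \<longlongrightarrow> e) at_top)"

definition glob_asym_stable_in :: "(state \<Rightarrow> state) \<Rightarrow> state set \<Rightarrow> state set \<Rightarrow> state \<Rightarrow> bool" where
  "glob_asym_stable_in F D P e \<longleftrightarrow> stable_in F D e \<and>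
     (\<forall>x. ode_solution F x \<and> x 0 \<in> P \<longrightarrow> (x \<longlongrightarrow> e) at_top)"

end

theory Submission imports Defs begin

lemma deriv_diff_le:
  fixes f :: "real \<Rightarrow> real"
  assumes d: "\<And>t. t \<ge> 0 \<Longrightarrow> (f has_real_derivative f' t) (at t within {0..})"
    and a: "0 \<le> a" "a \<le> b" and m: "\<And>t. a < t \<Longrightarrow> t < b \<Longrightarrow> f' t \<le> m"
  shows "f b - f a \<le> m * (b - a)"
proof (cases "a = b")
  case True then show ?thesis by simp
next
  case False
  then have ab: "a < b" using a by simp
  have cont: "continuous_on {a..b} f"
  proof -
    have "continuous_on {0..} f"
      unfolding continuous_on_eq_continuous_within using d DERIV_continuous by blast
    then show ?thesis by (rule continuous_on_subset) (use a in auto)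
  qed
  have dat: "(f has_real_derivative f' t) (at t)" if "0 < t" for t
  proof -
    have "at t within {0..} = at t"
      by (rule at_within_interior) (use that in simp)
    then show ?thesis using d[of t] that by simp
  qed
  have "f differentiable at x" if "a < x" "x < b" for x
    using dat[of x] that a real_differentiable_def by force
  then obtain l z where z: "a < z" "z < b" "(f has_real_derivative l) (at z)" "f b - f a = (b - a) * l"
    using MVT[OF ab cont] by blast
  have "l = f' z" using z dat[of z] a DERIV_unique by force
  then show ?thesis using z m[of z] ab by (simp add: mult.commute mult_right_mono)
qed

lemma deriv_diff_ge:
  fixes f :: "real \<Rightarrow> real"
  assumes d: "\<And>t. t \<ge> 0 \<Longrightarrow> (f has_real_derivative f' t) (at t within {0..})"
    and a: "0 \<le> a" "a \<le> b" and m: "\<And>t. a < t \<Longrightarrow> t < b \<Longrightarrow> f' t \<ge> m"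
  shows "f b - f a \<ge> m * (b - a)"
proof -
  have "(-f b) - (-f a) \<le> (-m) * (b - a)"
    by (rule deriv_diff_le[where f="\<lambda>t. - f t" and f'="\<lambda>t. - f' t"])
      (use d a m in \<open>auto intro: derivative_intros\<close>)
  then show ?thesis by simp
qed

lemma deriv_cont:
  fixes f :: "real \<Rightarrow> real"
  assumes d: "\<And>t. t \<ge> 0 \<Longrightarrow> (f has_real_derivative f' t) (at t within {0..})"
  shows "continuous_on {0..} f"
  unfolding continuous_on_eq_continuous_within using d DERIV_continuous by blast

lemma barrier:
  fixes f :: "real \<Rightarrow> real"
  assumes d: "\<And>t. t \<ge> 0 \<Longrightarrow> (f has_real_derivative f' t) (at t within {0..})"
    and b: "\<And>t. t \<ge> 0 \<Longrightarrow> f t > M \<Longrightarrow> f' t \<le> 0"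
    and t: "t \<ge> 0"
  shows "f t \<le> max (f 0) M"
proof (rule ccontr)
  define m where "m = max (f 0) M"
  assume "\<not> f t \<le> max (f 0) M"
  then have ft: "f t > m" unfolding m_def by linarith
  define S where "S = {0..t} \<inter> f -` {..m}"
  have cS: "closed S" unfolding S_def
    by (rule continuous_closed_preimage)
       (auto intro: continuous_on_subset[OF deriv_cont[OF d]])
  have 0: "0 \<in> S" using t unfolding S_def m_def by auto
  have bS: "bdd_above S" unfolding S_def by (auto intro: bdd_aboveI[of _ t])
  define s0 where "s0 = Sup S"
  have s0S: "s0 \<in> S" unfolding s0_def using closed_contains_Sup[OF _ bS cS] 0 by auto
  have s0t: "s0 \<le> t" "0 \<le> s0" "f s0 \<le> m" using s0S unfolding S_def by auto
  have gt: "f s > m" if "s0 < s" "s \<le> t" for s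
  proof (rule ccontr)
    assume "\<not> f s > m"
    then have "s \<in> S" using that s0t unfolding S_def by auto
    then have "s \<le> s0" unfolding s0_def using bS by (simp add: cSup_upper)
    then show False using that by simp
  qed
  have "f t - f s0 \<le> 0 * (t - s0)"
  proof (rule deriv_diff_le[OF d])
    fix s assume "s0 < s" "s < t"
    then have "f s > m" using gt by simp
    then have "f s > M" unfolding m_def by linarith
    then show "f' s \<le> 0" using b \<open>s0 < s\<close> s0t by simp
  qed (use s0t in auto)
  then show False using ft s0t by simp
qed

primrec picard :: "('a::euclidean_space \<Rightarrow> 'a) \<Rightarrow> 'a \<Rightarrow> nat \<Rightarrow> real \<Rightarrow> 'a" where
  "picard G x0 0 = (\<lambda>t. x0)"
| "picard G x0 (Suc n) = (\<lambda>t. x0 + integral {0..t} (\<lambda>s. G (picard G x0 n s)))"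

lemma has_integral_pow0:
  fixes t :: real assumes "t \<ge> 0"
  shows "((\<lambda>s. s ^ k) has_integral t ^ Suc k / real (Suc k)) {0..t}"
proof -
  have "((\<lambda>s. s ^ k) has_integral (\<lambda>s. s ^ Suc k / real (Suc k)) t - (\<lambda>s. s ^ Suc k / real (Suc k)) 0) {0..t}"
  proof (rule fundamental_theorem_of_calculus)
    fix x :: real assume "x \<in> {0..t}"
    have "((\<lambda>s. s ^ Suc k) has_real_derivative real (Suc k) * x ^ k) (at x within {0..t})"
      using DERIV_pow[of "Suc k" x] has_field_derivative_at_within by simp
    then have "((\<lambda>s. s ^ Suc k / real (Suc k)) has_real_derivative (real (Suc k) * x ^ k / real (Suc k))) (at x within {0..t})"
      by (rule DERIV_cdivide)
    then show "((\<lambda>s. s ^ Suc k / real (Suc k)) has_vector_derivative x ^ k) (at x within {0..t})"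
      by (simp add: has_real_derivative_iff_has_vector_derivative[symmetric])
  qed (use assms in auto)
  then show ?thesis by simp
qed

lemma picard_global:
  fixes G :: "'a::euclidean_space \<Rightarrow> 'a" and x0 :: 'a
  assumes L: "L \<ge> 0" and lip: "\<And>x y. norm (G x - G y) \<le> L * norm (x - y)"
  shows "\<exists>x. x 0 = x0 \<and> (\<forall>t\<ge>0. (x has_vector_derivative G (x t)) (at t within {0..}))"
proof -
  have "L-lipschitz_on UNIV G" using L lip by (intro lipschitz_onI) (auto simp: dist_norm)
  then have contG: "continuous_on UNIV G" by (rule lipschitz_on_continuous_on)
  then have isc: "isCont G z" for z by (simp add: continuous_on_eq_continuous_at)
  define X where "X = picard G x0"
  have X0: "X 0 = (\<lambda>t. x0)" and XS: "\<And>n. X (Suc n) = (\<lambda>t. x0 + integral {0..t} (\<lambda>s. G (X n s)))"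
    by (simp_all add: X_def)
  have cont: "continuous_on {0..T} (X n)" for n T
  proof (induction n)
    case 0 show ?case by (simp add: X0)
  next
    case (Suc n)
    have cg: "continuous_on {0..T} (\<lambda>s. G (X n s))"
      by (rule continuous_on_compose2[OF contG Suc]) auto
    have "continuous_on {0..T} (\<lambda>t. integral {0..t} (\<lambda>s. G (X n s)))"
      unfolding continuous_on_eq_continuous_within
      using integral_has_vector_derivative[OF cg] has_vector_derivative_continuous by blast
    then show ?case by (simp add: XS continuous_on_add)
  qed
  have contG': "continuous_on {0..T} (\<lambda>s. G (X n s))" for n T
    by (rule continuous_on_compose2[OF contG cont]) auto
  have intG: "(\<lambda>s. G (X n s)) integrable_on {0..T}" for n T
    by (rule integrable_continuous_real[OF contG'])
  define b where "b = norm (G x0)"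
  have b0: "b \<ge> 0" by (simp add: b_def)
  have D: "norm (X (Suc n) t - X n t) \<le> b * L^n * t^(Suc n) / fact (Suc n)" if "t \<ge> 0" for n t
    using that
  proof (induction n arbitrary: t)
    case 0
    have "X 1 t - X 0 t = integral {0..t} (\<lambda>s. G x0)" by (simp add: XS X0)
    also have "\<dots> = t *\<^sub>R G x0" using 0 by (simp add: integral_const_real)
    finally show ?case using 0 by (simp add: b_def)
  next
    case (Suc n)
    have e1: "X (Suc (Suc n)) t = x0 + integral {0..t} (\<lambda>s. G (X (Suc n) s))"
      by (simp only: XS[of "Suc n"])
    have e2: "X (Suc n) t = x0 + integral {0..t} (\<lambda>s. G (X n s))"
      by (simp only: XS[of n])
    have "X (Suc (Suc n)) t - X (Suc n) t = integral {0..t} (\<lambda>s. G (X (Suc n) s) - G (X n s))"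
      unfolding integral_diff[OF intG intG] by (subst e1, subst e2) simp
    also have "norm \<dots> \<le> integral {0..t} (\<lambda>s. (L * (b * L^n / fact (Suc n))) * s^(Suc n))"
    proof (rule integral_norm_bound_integral)
      show "(\<lambda>s. G (X (Suc n) s) - G (X n s)) integrable_on {0..t}"
        by (rule integrable_diff[OF intG intG])
      show "(\<lambda>s. (L * (b * L^n / fact (Suc n))) * s^(Suc n)) integrable_on {0..t}"
        by (rule integrable_continuous_real) (auto intro!: continuous_intros)
      fix s assume s: "s \<in> {0..t}"
      have "norm (G (X (Suc n) s) - G (X n s)) \<le> L * norm (X (Suc n) s - X n s)" by (rule lip)
      also have "\<dots> \<le> L * (b * L^n * s^(Suc n) / fact (Suc n))"
        using mult_left_mono[OF Suc.IH[of s] L] s by simp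
      finally show "norm (G (X (Suc n) s) - G (X n s)) \<le> (L * (b * L^n / fact (Suc n))) * s^(Suc n)"
        by (simp add: field_simps)
    qed
    also have "\<dots> = (L * (b * L^n / fact (Suc n))) * (t ^ Suc (Suc n) / real (Suc (Suc n)))"
      using has_integral_mult_right[OF has_integral_pow0[OF Suc.prems, of "Suc n"]]
      by (rule integral_unique)
    also have "\<dots> = b * L ^ Suc n * t ^ Suc (Suc n) / fact (Suc (Suc n))"
      by (simp add: field_simps)
    finally show ?case .
  qed
  define M where "M T n = b * L^n * T^(Suc n) / fact (Suc n)" for T n
  have sumM: "summable (M T)" if "T \<ge> 0" for T
  proof (rule summable_comparison_test')
    show "summable (\<lambda>n. (b * T) * (inverse (fact n) * (L * T) ^ n))"
      by (rule summable_mult[OF summable_exp])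
    fix n
    have "M T n = (b * T * (L * T) ^ n) / fact (Suc n)" unfolding M_def by (simp add: power_mult_distrib field_simps)
    also have "\<dots> \<le> (b * T * (L * T) ^ n) / fact n"
      by (rule divide_left_mono) (use that b0 L in \<open>auto simp: fact_mono\<close>)
    finally show "norm (M T n) \<le> (b * T) * (inverse (fact n) * (L * T) ^ n)"
      using that b0 L by (simp add: M_def field_simps)
  qed
  have Dle: "norm (X (Suc n) t - X n t) \<le> M T n" if "0 \<le> t" "t \<le> T" for n t T
  proof -
    have "b * L^n * t^(Suc n) / fact (Suc n) \<le> b * L^n * T^(Suc n) / fact (Suc n)"
      using that b0 L by (intro divide_right_mono mult_left_mono power_mono) auto
    then show ?thesis using D[OF that(1), of n] unfolding M_def by linarith
  qed
  define d where "d k t = X (Suc k) t - X k t" for k t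
  define Y where "Y t = x0 + (\<Sum>k. d k t)" for t
  have Xsum: "X n t = x0 + (\<Sum>k<n. d k t)" for n t
    unfolding d_def using sum_lessThan_telescope[of "\<lambda>k. X k t" n] by (simp add: X0)
  have sumd: "summable (\<lambda>k. d k t)" if "t \<ge> 0" for t
    by (rule summable_comparison_test'[OF sumM[OF that]]) (use Dle that in \<open>auto simp: d_def\<close>)
  have conv: "(\<lambda>n. X n t) \<longlonglongrightarrow> Y t" if "t \<ge> 0" for t
    unfolding Xsum Y_def by (intro tendsto_add tendsto_const summable_LIMSEQ sumd that)
  have contY: "continuous_on {0..T} Y" if "T \<ge> 0" for T
  proof -
    have ul: "uniform_limit {0..T} (\<lambda>n t. \<Sum>k<n. d k t) (\<lambda>t. \<Sum>k. d k t) sequentially"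
      by (rule Weierstrass_m_test[OF _ sumM[OF that]]) (auto simp: d_def intro: Dle)
    have "continuous_on {0..T} (\<lambda>t. \<Sum>k. d k t)"
      by (rule uniform_limit_theorem[OF _ ul])
         (auto simp: d_def intro!: always_eventually continuous_intros cont)
    then show ?thesis unfolding Y_def by (intro continuous_intros)
  qed
  have bound: "norm (X n s - x0) \<le> suminf (M T)" if "0 \<le> s" "s \<le> T" for n s T
  proof -
    have "norm (X n s - x0) = norm (\<Sum>k<n. d k s)" by (simp add: Xsum)
    also have "\<dots> \<le> (\<Sum>k<n. norm (d k s))" by (rule norm_sum)
    also have "\<dots> \<le> (\<Sum>k<n. M T k)" by (intro sum_mono) (use that Dle in \<open>auto simp: d_def\<close>)
    also have "\<dots> \<le> suminf (M T)"
      by (rule sum_le_suminf[OF sumM]) (use that b0 L in \<open>auto simp: M_def\<close>)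
    finally show ?thesis .
  qed
  have inteq: "Y t = x0 + integral {0..t} (\<lambda>s. G (Y s))" if t: "t \<ge> 0" for t
  proof -
    have l1: "(\<lambda>n. X (Suc n) t) \<longlonglongrightarrow> Y t" using conv[OF t] by (rule LIMSEQ_Suc)
    have "(\<lambda>n. integral {0..t} (\<lambda>s. G (X n s))) \<longlonglongrightarrow> integral {0..t} (\<lambda>s. G (Y s))"
    proof (rule dominated_convergence(2))
      show "(\<lambda>s. b + L * suminf (M t)) integrable_on {0..t}" by (rule integrable_const_ivl)
      show "(\<lambda>s. G (X n s)) integrable_on {0..t}" for n by (rule intG)
      fix n s assume s: "s \<in> {0..t}"
      have "norm (G (X n s)) \<le> norm (G x0) + norm (G (X n s) - G x0)" by (rule norm_triangle_sub)
      also have "\<dots> \<le> b + L * norm (X n s - x0)" using lip[of "X n s" x0] by (simp add: b_def)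
      also have "\<dots> \<le> b + L * suminf (M t)" using bound[of s t n] s L by (auto intro: mult_left_mono)
      finally show "norm (G (X n s)) \<le> b + L * suminf (M t)" .
    next
      fix s assume s: "s \<in> {0..t}"
      show "(\<lambda>n. G (X n s)) \<longlonglongrightarrow> G (Y s)"
        by (rule isCont_tendsto_compose[OF isc conv]) (use s in auto)
    qed
    then have "(\<lambda>n. X (Suc n) t) \<longlonglongrightarrow> x0 + integral {0..t} (\<lambda>s. G (Y s))"
      unfolding XS by (intro tendsto_add tendsto_const)
    with l1 show ?thesis by (rule LIMSEQ_unique)
  qed
  have "(Y has_vector_derivative G (Y t)) (at t within {0..})" if t: "t \<ge> 0" for t
  proof -
    define T where "T = t + 1"
    have T: "T \<ge> 0" "t \<in> {0..T}" using t by (auto simp: T_def)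
    have cGY: "continuous_on {0..T} (\<lambda>s. G (Y s))"
      by (rule continuous_on_compose2[OF contG contY[OF T(1)]]) auto
    have "((\<lambda>u. x0 + integral {0..u} (\<lambda>s. G (Y s))) has_vector_derivative G (Y t)) (at t within {0..T})"
      using integral_has_vector_derivative[OF cGY T(2)] by (auto intro!: derivative_eq_intros)
    then have "(Y has_vector_derivative G (Y t)) (at t within {0..T})"
      by (rule has_vector_derivative_transform_within[where d=1]) (use T inteq in auto)
    moreover have "at t within {0..T} = at t within {0..}"
      by (rule at_within_nhd[of t "{..<T}"]) (auto simp: T_def)
    ultimately show ?thesis by simp
  qed
  moreover have "Y 0 = x0" using inteq[of 0] by simp
  ultimately show ?thesis by blast
qed

lemma prod_diff_bound:
  fixes x y x' y' B D :: real
  assumes "\<bar>x\<bar> \<le> B" "\<bar>y'\<bar> \<le> B" "\<bar>x - x'\<bar> \<le> D" "\<bar>y - y'\<bar> \<le> D"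
  shows "\<bar>x * y - x' * y'\<bar> \<le> 2 * B * D"
proof -
  have "x * y - x' * y' = x * (y - y') + y' * (x - x')" by (simp add: algebra_simps)
  then have "\<bar>x * y - x' * y'\<bar> \<le> \<bar>x\<bar> * \<bar>y - y'\<bar> + \<bar>y'\<bar> * \<bar>x - x'\<bar>"
    by (metis abs_mult abs_triangle_ineq)
  also have "\<dots> \<le> B * D + B * D"
    using assms by (intro add_mono mult_mono) auto
  finally show ?thesis by simp
qed

lemma abs_sum4: "\<bar>(p::real) - q - r - s\<bar> \<le> \<bar>p\<bar> + \<bar>q\<bar> + \<bar>r\<bar> + \<bar>s\<bar>" by linarith
lemma abs_sum3: "\<bar>(p::real) - q + r\<bar> \<le> \<bar>p\<bar> + \<bar>q\<bar> + \<bar>r\<bar>" by linarith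
lemma abs_sum2: "\<bar>(p::real) + r\<bar> \<le> \<bar>p\<bar> + \<bar>r\<bar>" by linarith

definition cl :: "real \<Rightarrow> real \<Rightarrow> real" where "cl B x = max 0 (min B x)"

lemma cl_lip: "\<bar>cl B x - cl B y\<bar> \<le> \<bar>x - y\<bar>"
  unfolding cl_def by (auto simp: max_def min_def)

lemma cl_bounds: "0 \<le> B \<Longrightarrow> 0 \<le> cl B x \<and> cl B x \<le> B"
  unfolding cl_def by auto

lemma cl_id: "0 \<le> x \<Longrightarrow> x \<le> B \<Longrightarrow> cl B x = x"
  unfolding cl_def by auto

locale sys =
  fixes r1 r2 a12 a13 a21 a31 mu :: real
  assumes pos: "r1 > 0" "r2 > 0" "a12 > 0" "a13 > 0" "a21 > 0" "a31 > 0" "mu > 0"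
begin

abbreviation "F \<equiv> field r1 r2 a12 a13 a21 a31 mu"

lemma F_simp: "F (u, v, w) = (r1 * u * (1 - u) - a12 * u * v - a13 * u * w, r2 * v * (1 - v) + a21 * u * v, - mu * w + a31 * u * w)"
  by (simp add: field_def)

lemma comp_derivs:
  assumes "(x has_vector_derivative (D :: state)) (at t within S)"
  shows "((\<lambda>t. fst (x t)) has_real_derivative fst D) (at t within S)"
    and "((\<lambda>t. fst (snd (x t))) has_real_derivative fst (snd D)) (at t within S)"
    and "((\<lambda>t. snd (snd (x t))) has_real_derivative snd (snd D)) (at t within S)"
proof -
  show "((\<lambda>t. fst (x t)) has_real_derivative fst D) (at t within S)"
    using bounded_linear.has_vector_derivative[OF bounded_linear_fst assms]
    by (simp add: has_real_derivative_iff_has_vector_derivative)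
  show "((\<lambda>t. fst (snd (x t))) has_real_derivative fst (snd D)) (at t within S)"
    using bounded_linear.has_vector_derivative[OF bounded_linear_fst_comp[OF bounded_linear_snd] assms]
    by (simp add: has_real_derivative_iff_has_vector_derivative)
  show "((\<lambda>t. snd (snd (x t))) has_real_derivative snd (snd D)) (at t within S)"
    using bounded_linear.has_vector_derivative[OF bounded_linear_snd_comp[OF bounded_linear_snd] assms]
    by (simp add: has_real_derivative_iff_has_vector_derivative)
qed

lemma sol_derivs:
  assumes "ode_solution F x" "t \<ge> 0"
  defines "u \<equiv> \<lambda>t. fst (x t)" and "v \<equiv> \<lambda>t. fst (snd (x t))" and "w \<equiv> \<lambda>t. snd (snd (x t))"
  shows "(u has_real_derivative u t * (r1 * (1 - u t) - a12 * v t - a13 * w t)) (at t within {0..})"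
    and "(v has_real_derivative v t * (r2 * (1 - v t) + a21 * u t)) (at t within {0..})"
    and "(w has_real_derivative w t * (a31 * u t - mu)) (at t within {0..})"
proof -
  have d: "(x has_vector_derivative F (x t)) (at t within {0..})"
    using assms unfolding ode_solution_def by auto
  have xt: "x t = (u t, v t, w t)" unfolding u_def v_def w_def by simp
  have Fx: "F (x t) = (u t * (r1 * (1 - u t) - a12 * v t - a13 * w t),
      v t * (r2 * (1 - v t) + a21 * u t), w t * (a31 * u t - mu))"
    unfolding xt F_simp by (simp add: algebra_simps)
  show "(u has_real_derivative u t * (r1 * (1 - u t) - a12 * v t - a13 * w t)) (at t within {0..})"
    using comp_derivs(1)[OF d] unfolding Fx u_def by simp
  show "(v has_real_derivative v t * (r2 * (1 - v t) + a21 * u t)) (at t within {0..})"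
    using comp_derivs(2)[OF d] unfolding Fx v_def by simp
  show "(w has_real_derivative w t * (a31 * u t - mu)) (at t within {0..})"
    using comp_derivs(3)[OF d] unfolding Fx w_def by simp
qed

lemma exists_sol:
  assumes u0: "0 \<le> u0" "u0 \<le> 1" and v0: "0 \<le> v0" "v0 \<le> 1 + a21 / r2" and w0: "0 \<le> w0"
  shows "\<exists>x. ode_solution F x \<and> x 0 = (u0, v0, w0) \<and> (\<forall>t\<ge>0. x t \<in> orthant)"
proof -
  define Bv where "Bv = 1 + a21 / r2"
  define Sm where "Sm = max (a31 * u0 + a13 * w0) (a31 + a31 * r1 / (4 * mu))"
  define Wm where "Wm = Sm / a13"
  define B where "B = max 1 (max Bv Wm)"
  have Bv0: "Bv \<ge> 1" using pos unfolding Bv_def by simp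
  have Sm0: "Sm \<ge> 0" using pos u0 w0 unfolding Sm_def by (simp add: le_max_iff_disj)
  have Wm0: "Wm \<ge> 0" using pos Sm0 unfolding Wm_def by simp
  have B1: "B \<ge> 1" "Bv \<le> B" "Wm \<le> B" unfolding B_def by auto
  define P where "P = (\<lambda>(u::real, v::real, w::real). (cl 1 u, cl Bv v, cl Wm w))"
  define G where "G = (\<lambda>p. F (P p))"
  have Gsimp: "G (u, v, w) = (r1 * cl 1 u * (1 - cl 1 u) - a12 * cl 1 u * cl Bv v - a13 * cl 1 u * cl Wm w,
      r2 * cl Bv v * (1 - cl Bv v) + a21 * cl 1 u * cl Bv v, - mu * cl Wm w + a31 * cl 1 u * cl Wm w)" for u v w
    unfolding G_def P_def by (simp add: F_simp)
  define K where "K = (r1 + 2 * B * (r1 + a12 + a13)) + (r2 + 2 * B * (r2 + a21)) + (mu + 2 * B * a31)"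
  have K0: "K \<ge> 0" unfolding K_def using pos B1 by simp
  have lip: "norm (G p - G q) \<le> (3 * K) * norm (p - q)" for p q
  proof -
    obtain u v w where p: "p = (u, v, w)" by (cases p) auto
    obtain u' v' w' where q: "q = (u', v', w')" by (cases q) auto
    define a where "a = cl 1 u" define b where "b = cl Bv v" define c where "c = cl Wm w"
    define a' where "a' = cl 1 u'" define b' where "b' = cl Bv v'" define c' where "c' = cl Wm w'"
    define D where "D = \<bar>a - a'\<bar> + \<bar>b - b'\<bar> + \<bar>c - c'\<bar>"
    have ab: "0 \<le> a" "a \<le> B" "0 \<le> a'" "a' \<le> B" "0 \<le> b" "b \<le> B" "0 \<le> b'" "b' \<le> B"
       "0 \<le> c" "c \<le> B" "0 \<le> c'" "c' \<le> B"
      unfolding a_def b_def c_def a'_def b'_def c'_def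
      using cl_bounds[of 1 u] cl_bounds[of 1 u'] cl_bounds[OF Wm0, of w] cl_bounds[OF Wm0, of w']
        cl_bounds[of Bv v] cl_bounds[of Bv v'] Bv0 B1 by linarith+
    have dD: "\<bar>a - a'\<bar> \<le> D" "\<bar>b - b'\<bar> \<le> D" "\<bar>c - c'\<bar> \<le> D" unfolding D_def by auto
    have pr: "\<bar>x * y - x' * y'\<bar> \<le> 2 * B * D" if "x \<in> {a, b, c}" "x' \<in> {a', b', c'}" "y \<in> {a, b, c}" "y' \<in> {a', b', c'}"
      "\<bar>x - x'\<bar> \<le> D" "\<bar>y - y'\<bar> \<le> D" for x y x' y'
      by (rule prod_diff_bound) (use that ab in auto)
    have paa: "\<bar>a * a - a' * a'\<bar> \<le> 2 * B * D" by (rule pr) (use dD in auto)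
    have pab: "\<bar>a * b - a' * b'\<bar> \<le> 2 * B * D" by (rule pr) (use dD in auto)
    have pac: "\<bar>a * c - a' * c'\<bar> \<le> 2 * B * D" by (rule pr) (use dD in auto)
    have pbb: "\<bar>b * b - b' * b'\<bar> \<le> 2 * B * D" by (rule pr) (use dD in auto)
    have G1: "\<bar>(r1 * a * (1 - a) - a12 * a * b - a13 * a * c) - (r1 * a' * (1 - a') - a12 * a' * b' - a13 * a' * c')\<bar>
        \<le> (r1 + 2 * B * (r1 + a12 + a13)) * D"
    proof -
      have e: "(r1 * a * (1 - a) - a12 * a * b - a13 * a * c) - (r1 * a' * (1 - a') - a12 * a' * b' - a13 * a' * c')
        = r1 * (a - a') - r1 * (a * a - a' * a') - a12 * (a * b - a' * b') - a13 * (a * c - a' * c')"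
        by (simp add: algebra_simps)
      have "\<bar>r1 * (a - a') - r1 * (a * a - a' * a') - a12 * (a * b - a' * b') - a13 * (a * c - a' * c')\<bar>
          \<le> r1 * \<bar>a - a'\<bar> + r1 * \<bar>a * a - a' * a'\<bar> + a12 * \<bar>a * b - a' * b'\<bar> + a13 * \<bar>a * c - a' * c'\<bar>"
        using pos abs_sum4[of "r1 * (a - a')" "r1 * (a * a - a' * a')" "a12 * (a * b - a' * b')" "a13 * (a * c - a' * c')"] by (simp add: abs_mult)
      also have "\<dots> \<le> r1 * D + r1 * (2 * B * D) + a12 * (2 * B * D) + a13 * (2 * B * D)"
        using pos dD paa pab pac by (intro add_mono mult_left_mono) auto
      also have "\<dots> = (r1 + 2 * B * (r1 + a12 + a13)) * D" by (simp add: algebra_simps)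
      finally show ?thesis unfolding e .
    qed
    have G2: "\<bar>(r2 * b * (1 - b) + a21 * a * b) - (r2 * b' * (1 - b') + a21 * a' * b')\<bar>
        \<le> (r2 + 2 * B * (r2 + a21)) * D"
    proof -
      have e: "(r2 * b * (1 - b) + a21 * a * b) - (r2 * b' * (1 - b') + a21 * a' * b')
        = r2 * (b - b') - r2 * (b * b - b' * b') + a21 * (a * b - a' * b')"
        by (simp add: algebra_simps)
      have "\<bar>r2 * (b - b') - r2 * (b * b - b' * b') + a21 * (a * b - a' * b')\<bar>
          \<le> r2 * \<bar>b - b'\<bar> + r2 * \<bar>b * b - b' * b'\<bar> + a21 * \<bar>a * b - a' * b'\<bar>"
        using pos abs_sum3[of "r2 * (b - b')" "r2 * (b * b - b' * b')" "a21 * (a * b - a' * b')"] by (simp add: abs_mult)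
      also have "\<dots> \<le> r2 * D + r2 * (2 * B * D) + a21 * (2 * B * D)"
        using pos dD pbb pab by (intro add_mono mult_left_mono) auto
      also have "\<dots> = (r2 + 2 * B * (r2 + a21)) * D" by (simp add: algebra_simps)
      finally show ?thesis unfolding e .
    qed
    have G3: "\<bar>(- mu * c + a31 * a * c) - (- mu * c' + a31 * a' * c')\<bar> \<le> (mu + 2 * B * a31) * D"
    proof -
      have e: "(- mu * c + a31 * a * c) - (- mu * c' + a31 * a' * c') = - mu * (c - c') + a31 * (a * c - a' * c')"
        by (simp add: algebra_simps)
      have "\<bar>- mu * (c - c') + a31 * (a * c - a' * c')\<bar> \<le> mu * \<bar>c - c'\<bar> + a31 * \<bar>a * c - a' * c'\<bar>"
        using pos abs_sum2[of "- mu * (c - c')" "a31 * (a * c - a' * c')"] by (simp add: abs_mult)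
      also have "\<dots> \<le> mu * D + a31 * (2 * B * D)"
        using pos dD pac by (intro add_mono mult_left_mono) auto
      also have "\<dots> = (mu + 2 * B * a31) * D" by (simp add: algebra_simps)
      finally show ?thesis unfolding e .
    qed
    have nG: "norm (G p - G q) \<le> K * D"
    proof -
      have nP: "norm (x::real, y::real, z::real) \<le> \<bar>x\<bar> + (\<bar>y\<bar> + \<bar>z\<bar>)" for x y z
        using order_trans[OF norm_Pair_le add_left_mono[OF norm_Pair_le], of x y z] by simp
      have "G p - G q = ((r1 * a * (1 - a) - a12 * a * b - a13 * a * c) - (r1 * a' * (1 - a') - a12 * a' * b' - a13 * a' * c'),
          (r2 * b * (1 - b) + a21 * a * b) - (r2 * b' * (1 - b') + a21 * a' * b'),
          (- mu * c + a31 * a * c) - (- mu * c' + a31 * a' * c'))"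
        unfolding p q Gsimp a_def b_def c_def a'_def b'_def c'_def by simp
      then have "norm (G p - G q) \<le> \<bar>(r1 * a * (1 - a) - a12 * a * b - a13 * a * c) - (r1 * a' * (1 - a') - a12 * a' * b' - a13 * a' * c')\<bar>
          + (\<bar>(r2 * b * (1 - b) + a21 * a * b) - (r2 * b' * (1 - b') + a21 * a' * b')\<bar>
          + \<bar>(- mu * c + a31 * a * c) - (- mu * c' + a31 * a' * c')\<bar>)"
        using nP by simp
      also have "\<dots> \<le> K * D" using G1 G2 G3 unfolding K_def by (simp add: algebra_simps)
      finally show ?thesis .
    qed
    have nu: "\<bar>u - u'\<bar> \<le> norm (p - q)" "\<bar>v - v'\<bar> \<le> norm (p - q)" "\<bar>w - w'\<bar> \<le> norm (p - q)"
    proof -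
      have pq: "p - q = (u - u', v - v', w - w')" unfolding p q by simp
      show "\<bar>u - u'\<bar> \<le> norm (p - q)" unfolding pq using norm_fst_le[of "u - u'" "(v - v', w - w')"] by simp
      show "\<bar>v - v'\<bar> \<le> norm (p - q)" unfolding pq
        using norm_fst_le[of "v - v'" "w - w'"] norm_snd_le[of "(v - v', w - w')" "u - u'"] by simp
      show "\<bar>w - w'\<bar> \<le> norm (p - q)" unfolding pq
        using norm_snd_le[of "w - w'" "v - v'"] norm_snd_le[of "(v - v', w - w')" "u - u'"] by simp
    qed
    have "D \<le> 3 * norm (p - q)"
      unfolding D_def a_def b_def c_def a'_def b'_def c'_def
      using cl_lip[of 1 u u'] cl_lip[of Bv v v'] cl_lip[of Wm w w'] nu by linarith
    then have "K * D \<le> K * (3 * norm (p - q))" using K0 by (rule mult_left_mono)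
    then show ?thesis using nG by simp
  qed
  obtain Y where Y0: "Y 0 = (u0, v0, w0)" and Yd: "\<And>t. t \<ge> 0 \<Longrightarrow> (Y has_vector_derivative G (Y t)) (at t within {0..})"
    using picard_global[of "3 * K" G "(u0, v0, w0)"] lip K0 by auto
  define u where "u t = fst (Y t)" for t
  define v where "v t = fst (snd (Y t))" for t
  define w where "w t = snd (snd (Y t))" for t
  have Yt: "Y t = (u t, v t, w t)" for t unfolding u_def v_def w_def by simp
  have du: "(u has_real_derivative (r1 * cl 1 (u t) * (1 - cl 1 (u t)) - a12 * cl 1 (u t) * cl Bv (v t) - a13 * cl 1 (u t) * cl Wm (w t))) (at t within {0..})"
    and dv: "(v has_real_derivative (r2 * cl Bv (v t) * (1 - cl Bv (v t)) + a21 * cl 1 (u t) * cl Bv (v t))) (at t within {0..})"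
    and dw: "(w has_real_derivative (- mu * cl Wm (w t) + a31 * cl 1 (u t) * cl Wm (w t))) (at t within {0..})"
    if "t \<ge> 0" for t
  proof -
    have ueq: "(\<lambda>t. fst (Y t)) = u" and veq: "(\<lambda>t. fst (snd (Y t))) = v" and weq: "(\<lambda>t. snd (snd (Y t))) = w"
      unfolding u_def v_def w_def by (auto simp: fun_eq_iff)
    note c = comp_derivs[OF Yd[OF that]]
    show "(u has_real_derivative (r1 * cl 1 (u t) * (1 - cl 1 (u t)) - a12 * cl 1 (u t) * cl Bv (v t) - a13 * cl 1 (u t) * cl Wm (w t))) (at t within {0..})"
      using c(1) unfolding Yt[of t] Gsimp ueq by simp
    show "(v has_real_derivative (r2 * cl Bv (v t) * (1 - cl Bv (v t)) + a21 * cl 1 (u t) * cl Bv (v t))) (at t within {0..})"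
      using c(2) unfolding Yt[of t] Gsimp veq by simp
    show "(w has_real_derivative (- mu * cl Wm (w t) + a31 * cl 1 (u t) * cl Wm (w t))) (at t within {0..})"
      using c(3) unfolding Yt[of t] Gsimp weq by simp
  qed
  have dnu: "((\<lambda>t. - u t) has_real_derivative - (r1 * cl 1 (u t) * (1 - cl 1 (u t)) - a12 * cl 1 (u t) * cl Bv (v t) - a13 * cl 1 (u t) * cl Wm (w t))) (at t within {0..})"
    if "t \<ge> 0" for t using du[OF that] by (rule derivative_intros)
  have dnv: "((\<lambda>t. - v t) has_real_derivative - (r2 * cl Bv (v t) * (1 - cl Bv (v t)) + a21 * cl 1 (u t) * cl Bv (v t))) (at t within {0..})"
    if "t \<ge> 0" for t using dv[OF that] by (rule derivative_intros)
  have dnw: "((\<lambda>t. - w t) has_real_derivative - (- mu * cl Wm (w t) + a31 * cl 1 (u t) * cl Wm (w t))) (at t within {0..})"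
    if "t \<ge> 0" for t using dw[OF that] by (rule derivative_intros)
  have U0: "u t \<ge> 0" if "t \<ge> 0" for t
  proof -
    have "- u t \<le> max (- u 0) 0"
    proof (rule barrier[OF dnu _ that])
      fix s :: real assume "0 \<le> s" "0 < - u s"
      then have "cl 1 (u s) = 0" unfolding cl_def by auto
      then show "- (r1 * cl 1 (u s) * (1 - cl 1 (u s)) - a12 * cl 1 (u s) * cl Bv (v s) - a13 * cl 1 (u s) * cl Wm (w s)) \<le> 0" by simp
    qed
    then show ?thesis using Y0 u0 Yt[of 0] by simp
  qed
  have V0: "v t \<ge> 0" if "t \<ge> 0" for t
  proof -
    have "- v t \<le> max (- v 0) 0"
    proof (rule barrier[OF dnv _ that])
      fix s :: real assume "0 \<le> s" "0 < - v s"
      then have "cl Bv (v s) = 0" unfolding cl_def by auto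
      then show "- (r2 * cl Bv (v s) * (1 - cl Bv (v s)) + a21 * cl 1 (u s) * cl Bv (v s)) \<le> 0" by simp
    qed
    then show ?thesis using Y0 v0 Yt[of 0] by simp
  qed
  have W0: "w t \<ge> 0" if "t \<ge> 0" for t
  proof -
    have "- w t \<le> max (- w 0) 0"
    proof (rule barrier[OF dnw _ that])
      fix s :: real assume "0 \<le> s" "0 < - w s"
      then have "cl Wm (w s) = 0" unfolding cl_def by auto
      then show "- (- mu * cl Wm (w s) + a31 * cl 1 (u s) * cl Wm (w s)) \<le> 0" by simp
    qed
    then show ?thesis using Y0 w0 Yt[of 0] by simp
  qed
  have U1: "u t \<le> 1" if "t \<ge> 0" for t
  proof -
    have "u t \<le> max (u 0) 1"
    proof (rule barrier[OF du _ that])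
      fix s :: real assume s: "0 \<le> s" "1 < u s"
      then have "cl 1 (u s) = 1" unfolding cl_def by auto
      moreover have "cl Bv (v s) \<ge> 0" "cl Wm (w s) \<ge> 0" using cl_bounds Wm0 Bv0 by auto
      ultimately show "r1 * cl 1 (u s) * (1 - cl 1 (u s)) - a12 * cl 1 (u s) * cl Bv (v s) - a13 * cl 1 (u s) * cl Wm (w s) \<le> 0"
      proof -
        have "a12 * cl Bv (v s) \<ge> 0" "a13 * cl Wm (w s) \<ge> 0"
          using pos \<open>cl Bv (v s) \<ge> 0\<close> \<open>cl Wm (w s) \<ge> 0\<close> by simp_all
        then show ?thesis using \<open>cl 1 (u s) = 1\<close> by simp
      qed
    qed
    then show ?thesis using Y0 u0 Yt[of 0] by simp
  qed
  have V1: "v t \<le> Bv" if "t \<ge> 0" for t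
  proof -
    have "v t \<le> max (v 0) Bv"
    proof (rule barrier[OF dv _ that])
      fix s :: real assume s: "0 \<le> s" "Bv < v s"
      then have c: "cl Bv (v s) = Bv" unfolding cl_def using Bv0 by auto
      have "cl 1 (u s) \<le> 1" using cl_bounds[of 1] by simp
      then have "r2 * (1 - Bv) + a21 * cl 1 (u s) \<le> r2 * (1 - Bv) + a21" using pos by simp
      also have "\<dots> = 0" unfolding Bv_def using pos by (simp add: field_simps)
      finally have "Bv * (r2 * (1 - Bv) + a21 * cl 1 (u s)) \<le> 0" using Bv0 by (simp add: mult_nonneg_nonpos)
      then show "r2 * cl Bv (v s) * (1 - cl Bv (v s)) + a21 * cl 1 (u s) * cl Bv (v s) \<le> 0"
        unfolding c by (simp add: algebra_simps)
    qed
    then show ?thesis using Y0 v0 Yt[of 0] unfolding Bv_def by simp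
  qed
  have cu: "cl 1 (u t) = u t" and cv: "cl Bv (v t) = v t" if "t \<ge> 0" for t
    using U0 U1 V0 V1 that by (auto intro!: cl_id)
  define S where "S t = a31 * u t + a13 * w t" for t
  have dS: "(S has_real_derivative (a31 * (r1 * u t * (1 - u t) - a12 * u t * v t - a13 * u t * cl Wm (w t))
      + a13 * (- mu * cl Wm (w t) + a31 * u t * cl Wm (w t)))) (at t within {0..})" if "t \<ge> 0" for t
    unfolding S_def[abs_def] using du[OF that] dw[OF that] cu[OF that] cv[OF that]
    by (auto intro!: derivative_eq_intros)
  have SS: "S t \<le> Sm" if "t \<ge> 0" for t
  proof -
    have "S t \<le> max (S 0) Sm"
    proof (rule barrier[OF dS _ that])
      fix s :: real assume s: "0 \<le> s" "Sm < S s"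
      define c where "c = cl Wm (w s)"
      have cc: "a13 * c \<ge> Sm - a31"
      proof (cases "w s \<le> Wm")
        case True
        then have "c = w s" unfolding c_def using W0[OF s(1)] by (simp add: cl_id)
        moreover have "a31 * u s \<le> a31 * 1" using U1[OF s(1)] pos by (intro mult_left_mono) auto
        ultimately show ?thesis using s unfolding S_def by simp
      next
        case False
        then have "c = Wm" unfolding c_def cl_def using Wm0 by auto
        then show ?thesis unfolding Wm_def using pos by simp
      qed
      have uu: "u s * (1 - u s) \<le> 1 / 4"
      proof -
        have "0 \<le> (u s - 1/2)^2" by simp
        then show ?thesis by (simp add: power2_eq_square algebra_simps)
      qed
      have "a31 * (r1 * u s * (1 - u s) - a12 * u s * v s - a13 * u s * c) + a13 * (- mu * c + a31 * u s * c)
          = a31 * r1 * (u s * (1 - u s)) - a31 * a12 * (u s * v s) - mu * (a13 * c)"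
        by (simp add: algebra_simps)
      also have "\<dots> \<le> a31 * r1 * (1/4) - 0 - mu * (Sm - a31)"
      proof -
        have "a31 * r1 * (u s * (1 - u s)) \<le> a31 * r1 * (1/4)" using uu pos by (intro mult_left_mono) auto
        moreover have "a31 * a12 * (u s * v s) \<ge> 0" using pos U0[OF s(1)] V0[OF s(1)] by simp
        moreover have "mu * (a13 * c) \<ge> mu * (Sm - a31)" using cc pos by (intro mult_left_mono) auto
        ultimately show ?thesis by linarith
      qed
      also have "\<dots> \<le> 0"
      proof -
        have "Sm \<ge> a31 + a31 * r1 / (4 * mu)" unfolding Sm_def by simp
        then have "mu * (Sm - a31) \<ge> mu * (a31 * r1 / (4 * mu))" using pos by (intro mult_left_mono) auto
        then show ?thesis using pos by simp
      qed
      finally show "a31 * (r1 * u s * (1 - u s) - a12 * u s * v s - a13 * u s * cl Wm (w s)) +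
          a13 * (- mu * cl Wm (w s) + a31 * u s * cl Wm (w s)) \<le> 0" unfolding c_def .
    qed
    moreover have "S 0 \<le> Sm" unfolding S_def Sm_def using Y0 Yt[of 0] by simp
    ultimately show ?thesis by simp
  qed
  have cw: "cl Wm (w t) = w t" if "t \<ge> 0" for t
  proof (rule cl_id[OF W0[OF that]])
    have "a13 * w t \<le> Sm" using SS[OF that] U0[OF that] pos unfolding S_def
      by (smt (verit) mult_nonneg_nonneg)
    then show "w t \<le> Wm" unfolding Wm_def using pos by (simp add: field_simps)
  qed
  have PY: "P (Y t) = Y t" if "t \<ge> 0" for t
    unfolding Yt P_def using cu[OF that] cv[OF that] cw[OF that] by simp
  have "ode_solution F Y" unfolding ode_solution_def
    using Yd PY unfolding G_def by simp
  moreover have "\<forall>t\<ge>0. Y t \<in> orthant" unfolding orthant_def using U0 V0 W0 Yt by auto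
  ultimately show ?thesis using Y0 by blast
qed

end

context sys begin

lemma dist_v_le: "\<bar>fst (snd a) - fst (snd b)\<bar> \<le> dist a (b :: state)"
  using dist_fst_le[of "snd a" "snd b"] dist_snd_le[of a b] by (simp add: dist_real_def)
lemma dist_u_le: "\<bar>fst a - fst b\<bar> \<le> dist a (b :: state)"
  using dist_fst_le[of a b] by (simp add: dist_real_def)
lemma dist_w_le: "\<bar>snd (snd a) - snd (snd b)\<bar> \<le> dist a (b :: state)"
  using dist_snd_le[of "snd a" "snd b"] dist_snd_le[of a b] by (simp add: dist_real_def)

lemma unstable_v:
  assumes p: "0 \<le> p" "p \<le> 1" and s: "0 \<le> s"
  shows "unstable_in F orthant (p, 0, s)"
  unfolding unstable_in_def stable_in_def
proof
  assume "\<forall>\<epsilon>>0. \<exists>\<delta>>0. \<forall>x. ode_solution F x \<and> x 0 \<in> orthant \<and> dist (x 0) (p, 0, s) < \<delta> \<longrightarrow>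
        (\<forall>t\<ge>0. dist (x t) (p, 0, s) < \<epsilon>)"
  then obtain \<delta> where d0: "\<delta> > 0" and H: "\<And>x. ode_solution F x \<Longrightarrow> x 0 \<in> orthant \<Longrightarrow> dist (x 0) (p, 0, s) < \<delta> \<Longrightarrow>
        (\<forall>t\<ge>0. dist (x t) (p, 0, s) < 1/2)"
    by (metis less_divide_eq_numeral1(1) mult_eq_0_iff zero_less_one zero_neq_numeral less_numeral_extra(1))
  define d where "d = min (\<delta>/2) (1/4)"
  have d: "d > 0" "d < \<delta>" "d \<le> 1/4" using d0 unfolding d_def by auto
  have "a21 / r2 > 0" using pos by simp
  then have "d \<le> 1 + a21 / r2" using d by linarith
  then obtain x where sol: "ode_solution F x" and x0: "x 0 = (p, d, s)" and orth: "\<forall>t\<ge>0. x t \<in> orthant"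
    using exists_sol[of p d s] p s d by auto
  have "dist (x 0) (p, 0, s) = d" unfolding x0 using d by (simp add: dist_Pair_Pair dist_real_def)
  then have close: "\<forall>t\<ge>0. dist (x t) (p, 0, s) < 1/2" using H[OF sol] x0 orth d by auto
  define u where "u t = fst (x t)" for t
  define v where "v t = fst (snd (x t))" for t
  have vlt: "v t < 1/2" if "t \<ge> 0" for t
    using dist_v_le[of "x t" "(p, 0, s)"] close that unfolding v_def by auto
  have nn: "u t \<ge> 0" "v t \<ge> 0" if "t \<ge> 0" for t
    using orth that unfolding u_def v_def orthant_def by (auto simp: case_prod_beta)
  have ueq: "u = (\<lambda>t. fst (x t))" and veq: "v = (\<lambda>t. fst (snd (x t)))" by (auto simp: u_def v_def fun_eq_iff)
  have dv: "(v has_real_derivative v t * (r2 * (1 - v t) + a21 * u t)) (at t within {0..})" if "t \<ge> 0" for t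
    using sol_derivs(2)[OF sol that] unfolding ueq veq .
  define h where "h t = v t * exp (- (r2/2) * t)" for t
  have dh: "(h has_real_derivative (v t * (r2 * (1 - v t) + a21 * u t)) * exp (- (r2/2) * t)
       + v t * (exp (- (r2/2) * t) * (- (r2/2)))) (at t within {0..})" if "t \<ge> 0" for t
    unfolding h_def[abs_def] using dv[OF that] by (auto intro!: derivative_eq_intros)
  define T where "T = 1 / (r2 * d)"
  have T0: "T \<ge> 0" unfolding T_def using pos d by simp
  have "h T - h 0 \<ge> 0 * (T - 0)"
  proof (rule deriv_diff_ge[OF dh order_refl T0])
    fix t :: real assume t: "0 < t" "t < T"
    have "(v t * (r2 * (1 - v t) + a21 * u t)) * exp (- (r2/2) * t) + v t * (exp (- (r2/2) * t) * (- (r2/2)))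
       = v t * exp (- (r2/2) * t) * (r2 * (1/2 - v t) + a21 * u t)" by (simp add: algebra_simps)
    also have "\<dots> \<ge> 0" using nn[of t] vlt[of t] t pos by (intro mult_nonneg_nonneg) auto
    finally show "0 \<le> (v t * (r2 * (1 - v t) + a21 * u t)) * exp (- (r2/2) * t) + v t * (exp (- (r2/2) * t) * (- (r2/2)))" .
  qed
  then have hT: "h T \<ge> d" using x0 unfolding h_def v_def by simp
  have "v T = h T * exp ((r2/2) * T)" unfolding h_def by (simp add: exp_minus field_simps)
  also have "\<dots> \<ge> d * (1 + (r2/2) * T)"
    using hT d exp_ge_add_one_self[of "(r2/2) * T"] pos T0 by (intro mult_mono) auto
  finally have "v T \<ge> d * (1 + (r2/2) * T)" .
  moreover have "d * (1 + (r2/2) * T) = d + 1/2" unfolding T_def using pos d by (simp add: field_simps)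
  ultimately have "v T \<ge> d + 1/2" by simp
  then show False using vlt[OF T0] d by simp
qed

end

definition phi :: "real \<Rightarrow> real \<Rightarrow> real" where "phi a x = x - a - a * ln (x / a)"

lemma phi0[simp]: "phi 0 x = x" unfolding phi_def by simp

lemma key_ln: assumes "y > 0" shows "y - 1 - ln y \<ge> (sqrt y - 1)^2"
proof -
  have s: "sqrt y > 0" using assms by simp
  have "ln y = 2 * ln (sqrt y)" using ln_sqrt[of y] assms by simp
  also have "\<dots> \<le> 2 * (sqrt y - 1)" using ln_le_minus_one[OF s] by simp
  finally have "y - 1 - ln y \<ge> y - 1 - 2 * (sqrt y - 1)" by simp
  moreover have "y - 1 - 2 * (sqrt y - 1) = (sqrt y - 1)^2"
    using assms by (simp add: power2_eq_square algebra_simps)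
  ultimately show ?thesis by simp
qed

lemma ln_half: fixes y :: real assumes "y > 0" shows "ln y \<le> y / 2"
proof -
  have s: "sqrt y > 0" using assms by simp
  have "ln y = 2 * ln (sqrt y)" using ln_sqrt[of y] assms by simp
  also have "\<dots> \<le> 2 * (sqrt y - 1)" using ln_le_minus_one[OF s] by simp
  also have "\<dots> \<le> y / 2"
  proof -
    have "0 \<le> (sqrt y - 2)^2" by simp
    also have "\<dots> = y - 4 * sqrt y + 4" using assms by (simp add: power2_eq_square algebra_simps)
    finally show ?thesis by simp
  qed
  finally show ?thesis .
qed

definition adm :: "real \<Rightarrow> real \<Rightarrow> bool" where "adm a x \<longleftrightarrow> x \<ge> 0 \<and> (a > 0 \<longrightarrow> x > 0)"

lemma phi_nonneg: assumes "a \<ge> 0" "adm a x" shows "phi a x \<ge> 0"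
proof (cases "a = 0")
  case True then show ?thesis using assms by (simp add: adm_def)
next
  case False
  then have a: "a > 0" and x: "x > 0" using assms by (auto simp: adm_def)
  have "ln (x / a) \<le> x / a - 1" using ln_le_minus_one a x by simp
  then have "a * ln (x / a) \<le> a * (x / a - 1)" using a by (intro mult_left_mono) auto
  moreover have "a * (x / a - 1) = x - a" using a by (simp add: algebra_simps)
  ultimately show ?thesis unfolding phi_def by simp
qed

lemma phi_bound: assumes "a \<ge> 0" "adm a x" shows "x \<le> 2 * (phi a x + a)"
proof (cases "a = 0")
  case True then show ?thesis using assms by (simp add: adm_def)
next
  case False
  then have a: "a > 0" and x: "x > 0" using assms by (auto simp: adm_def)
  have "ln (x / a) \<le> x / a / 2" using ln_half[of "x / a"] a x by simp
  then have "a * ln (x / a) \<le> a * (x / a / 2)" using a by (intro mult_left_mono) auto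
  moreover have "a * (x / a / 2) = x / 2" using a by simp
  ultimately show ?thesis unfolding phi_def by simp
qed

lemma phi_pos: assumes "a > 0" "x > 0" "x \<noteq> a" shows "phi a x > 0"
proof -
  have y: "x / a > 0" using assms by simp
  have "sqrt (x / a) \<noteq> 1" using assms by auto
  then have "(sqrt (x / a) - 1)^2 > 0" by simp
  then have "x / a - 1 - ln (x / a) > 0" using key_ln[OF y] by linarith
  then have "a * (x / a - 1 - ln (x / a)) > 0" using assms by simp
  moreover have "a * (x / a - 1 - ln (x / a)) = x - a - a * ln (x / a)" using assms by (simp add: algebra_simps)
  ultimately show ?thesis unfolding phi_def by simp
qed

lemma phi_diff: assumes "a \<ge> 0" "x > 0" "z > 0" shows "phi a x - phi a z \<ge> (x - z) * (1 - a / z)"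
proof (cases "a = 0")
  case True then show ?thesis by simp
next
  case False
  then have a: "a > 0" using assms by simp
  have "ln (x / z) \<le> x / z - 1" using ln_le_minus_one assms by simp
  then have "a * ln (x / z) \<le> a * (x / z - 1)" using a by (intro mult_left_mono) auto
  moreover have "ln (x / a) - ln (z / a) = ln (x / z)" using assms a by (simp add: ln_div)
  ultimately show ?thesis unfolding phi_def using assms a by (simp add: field_simps)
qed

lemma phi_sep: assumes "a \<ge> 0" "\<rho> > 0"
  shows "\<exists>m>0. \<forall>x. adm a x \<longrightarrow> phi a x < m \<longrightarrow> \<bar>x - a\<bar> < \<rho>"
proof (cases "a = 0")
  case True then show ?thesis using assms by (auto simp: adm_def intro!: exI[of _ \<rho>])
next
  case False
  then have a: "a > 0" using assms by simp
  define r where "r = min \<rho> (a / 2)"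
  have r: "r > 0" "r \<le> \<rho>" "r < a" using a assms unfolding r_def by auto
  define m where "m = min (phi a (a + r)) (phi a (a - r))"
  have m: "m > 0" unfolding m_def using phi_pos[of a "a + r"] phi_pos[of a "a - r"] a r by auto
  have "\<bar>x - a\<bar> < \<rho>" if x: "adm a x" "phi a x < m" for x
  proof (rule ccontr)
    assume "\<not> \<bar>x - a\<bar> < \<rho>"
    then have "x \<ge> a + r \<or> x \<le> a - r" using r by auto
    moreover have xp: "x > 0" using x a by (auto simp: adm_def)
    moreover {
      assume h: "x \<ge> a + r"
      have "phi a x - phi a (a + r) \<ge> (x - (a + r)) * (1 - a / (a + r))"
        by (rule phi_diff) (use a r xp in auto)
      moreover have "(x - (a + r)) * (1 - a / (a + r)) \<ge> 0"
        using h a r by (intro mult_nonneg_nonneg) (auto simp: field_simps)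
      ultimately have "phi a x \<ge> m" unfolding m_def by linarith }
    moreover {
      assume h: "x \<le> a - r"
      have "phi a x - phi a (a - r) \<ge> (x - (a - r)) * (1 - a / (a - r))"
        by (rule phi_diff) (use a r xp in auto)
      moreover have "(x - (a - r)) * (1 - a / (a - r)) \<ge> 0"
        using h a r by (intro mult_nonpos_nonpos) (auto simp: field_simps)
      ultimately have "phi a x \<ge> m" unfolding m_def by linarith }
    ultimately show False using x by linarith
  qed
  then show ?thesis using m by blast
qed

lemma phi_at: "phi a a = 0"
  unfolding phi_def by (cases "a = 0") auto

lemma phi_cont: assumes "a \<ge> 0" shows "isCont (phi a) a"
proof (cases "a = 0")
  case True
  then have "phi a = (\<lambda>x. x)" by (auto simp: fun_eq_iff)
  then show ?thesis by simp
next
  case False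
  then have a: "a > 0" using assms by simp
  show ?thesis unfolding phi_def[abs_def] using a by (auto intro!: continuous_intros)
qed

lemma phi_deriv:
  assumes "a \<ge> 0" and d: "(y has_real_derivative y t * g) (at t within S)" and ad: "adm a (y t)"
  shows "((\<lambda>t. phi a (y t)) has_real_derivative (y t - a) * g) (at t within S)"
proof (cases "a = 0")
  case True then show ?thesis using d by simp
next
  case False
  then have a: "a > 0" and yp: "y t > 0" using assms by (auto simp: adm_def)
  have "((\<lambda>t. y t - a - a * ln (y t / a)) has_real_derivative y t * g - a * ((y t * g / a) / (y t / a))) (at t within S)"
    using yp a by (auto intro!: derivative_eq_intros d)
  moreover have "y t * g - a * ((y t * g / a) / (y t / a)) = (y t - a) * g" using yp a by (simp add: field_simps)
  ultimately show ?thesis unfolding phi_def by simp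
qed

lemma sign_pres:
  fixes y g :: "real \<Rightarrow> real"
  assumes d: "\<And>t. t \<ge> 0 \<Longrightarrow> (y has_real_derivative y t * g t) (at t within {0..})"
    and gc: "continuous_on {0..} g" and t: "t \<ge> 0"
  shows "y t = y 0 * exp (integral {0..t} g)"
proof -
  define G where "G s = integral {0..s} g" for s
  have gct: "continuous_on {0..t} g" using gc by (rule continuous_on_subset) auto
  have dG: "(G has_real_derivative g s) (at s within {0..t})" if "s \<in> {0..t}" for s
    unfolding G_def using integral_has_vector_derivative[OF gct that]
    by (simp add: has_real_derivative_iff_has_vector_derivative)
  define h where "h s = y s * exp (- G s)" for s
  have "(h has_real_derivative 0) (at s within {0..t})" if s: "s \<in> {0..t}" for s
  proof -
    have dy: "(y has_real_derivative y s * g s) (at s within {0..t})"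
      using DERIV_subset[OF d[of s]] s by auto
    have "(h has_real_derivative (y s * g s) * exp (- G s) + y s * (exp (- G s) * (- g s))) (at s within {0..t})"
      unfolding h_def[abs_def] by (auto intro!: derivative_eq_intros dy dG s)
    then show ?thesis by (simp add: algebra_simps)
  qed
  then obtain c where c: "\<forall>s\<in>{0..t}. h s = c"
    using has_field_derivative_zero_constant[of "{0..t}" h] by auto
  have "h t = h 0" using c t by auto
  then have "y t * exp (- G t) = y 0" unfolding h_def G_def by simp
  then have "y t = y 0 * exp (G t)" by (simp add: exp_minus field_simps)
  then show ?thesis unfolding G_def .
qed

lemma sign_pres':
  fixes y g :: "real \<Rightarrow> real"
  assumes d: "\<And>t. t \<ge> 0 \<Longrightarrow> (y has_real_derivative y t * g t) (at t within {0..})"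
    and gc: "continuous_on {0..} g" and t: "t \<ge> 0"
  shows "(y 0 \<ge> 0 \<longrightarrow> y t \<ge> 0) \<and> (y 0 > 0 \<longrightarrow> y t > 0)"
  using sign_pres[OF d gc t] by simp

lemma barbalat:
  fixes V V' y :: "real \<Rightarrow> real"
  assumes dV: "\<And>t. t \<ge> 0 \<Longrightarrow> (V has_real_derivative V' t) (at t within {0..})"
    and Vnn: "\<And>t. t \<ge> 0 \<Longrightarrow> V t \<ge> 0"
    and V'le: "\<And>t. t \<ge> 0 \<Longrightarrow> V' t \<le> - c * (y t - a)^2"
    and c: "c > 0" and K: "K > 0"
    and lip: "\<And>t1 t2. t1 \<ge> 0 \<Longrightarrow> t2 \<ge> 0 \<Longrightarrow> \<bar>y t1 - y t2\<bar> \<le> K * \<bar>t1 - t2\<bar>"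
  shows "(y \<longlongrightarrow> a) at_top"
proof -
  have V'0: "V' t \<le> 0" if "t \<ge> 0" for t
  proof -
    have "c * (y t - a)^2 \<ge> 0" using c by simp
    then show ?thesis using V'le[OF that] by linarith
  qed
  have mono: "V t2 \<le> V t1" if "0 \<le> t1" "t1 \<le> t2" for t1 t2
    using deriv_diff_le[OF dV that, of 0] V'0 that by auto
  define L where "L = Inf (V ` {0..})"
  have bdd: "bdd_below (V ` {0..})" using Vnn by (auto intro!: bdd_belowI[of _ 0])
  have Lle: "L \<le> V t" if "t \<ge> 0" for t unfolding L_def using bdd that by (auto intro!: cInf_lower)
  show ?thesis unfolding tendsto_iff eventually_at_top_linorder dist_real_def
  proof (intro allI impI)
    fix \<eta> :: real assume eta: "\<eta> > 0"
    define h where "h = \<eta> / (2 * K)"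
    have h: "h > 0" unfolding h_def using eta K by simp
    define d0 where "d0 = c * (\<eta>/2)^2 * h"
    have d0: "d0 > 0" unfolding d0_def using c eta h by simp
    have "Inf (V ` {0..}) < L + d0" using d0 unfolding L_def by simp
    then obtain T0 where T0: "T0 \<ge> 0" "V T0 < L + d0"
      using cInf_less_iff[OF _ bdd] by auto
    have "\<bar>y t - a\<bar> < \<eta>" if t: "t \<ge> T0" for t
    proof (rule ccontr)
      assume nt: "\<not> \<bar>y t - a\<bar> < \<eta>"
      have far: "\<bar>y s - a\<bar> \<ge> \<eta> / 2" if s: "t \<le> s" "s \<le> t + h" for s
      proof -
        have "\<bar>y s - y t\<bar> \<le> K * \<bar>s - t\<bar>" using lip[of s t] s t T0 by auto
        also have "\<dots> \<le> K * h" using s K by (intro mult_left_mono) auto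
        also have "\<dots> = \<eta> / 2" unfolding h_def using K by simp
        finally show ?thesis using nt by linarith
      qed
      have "V (t + h) - V t \<le> (- c * (\<eta>/2)^2) * ((t + h) - t)"
      proof (rule deriv_diff_le[OF dV])
        fix s assume s: "t < s" "s < t + h"
        have "(\<eta>/2)^2 \<le> (y s - a)^2"
        proof -
          have "(\<eta>/2)^2 \<le> \<bar>y s - a\<bar>^2" using far[of s] s eta by (intro power_mono) auto
          then show ?thesis by simp
        qed
        then have "c * (\<eta>/2)^2 \<le> c * (y s - a)^2" using c by (intro mult_left_mono) auto
        then show "V' s \<le> - c * (\<eta>/2)^2" using V'le[of s] s t T0 by simp
      qed (use t T0 h in auto)
      then have "V (t + h) \<le> V t - d0" unfolding d0_def by simp
      also have "\<dots> \<le> V T0 - d0" using mono[of T0 t] t T0 by simp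
      also have "\<dots> < L" using T0 by simp
      finally show False using Lle[of "t + h"] t T0 h by simp
    qed
    then show "\<exists>N. \<forall>n\<ge>N. \<bar>y n - a\<bar> < \<eta>" by blast
  qed
qed

lemma lip_from_deriv:
  fixes f :: "real \<Rightarrow> real"
  assumes d: "\<And>t. t \<ge> 0 \<Longrightarrow> (f has_real_derivative f' t) (at t within {0..})"
    and b: "\<And>t. t \<ge> 0 \<Longrightarrow> \<bar>f' t\<bar> \<le> K"
    and t: "t1 \<ge> 0" "t2 \<ge> 0"
  shows "\<bar>f t1 - f t2\<bar> \<le> K * \<bar>t1 - t2\<bar>"
proof -
  have *: "\<bar>f b - f a\<bar> \<le> K * (b - a)" if "0 \<le> a" "a \<le> b" for a b
  proof -
    have "f b - f a \<le> K * (b - a)" by (rule deriv_diff_le[OF d that]) (use b that in \<open>auto simp: abs_le_iff\<close>)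
    moreover have "f b - f a \<ge> (- K) * (b - a)"
    proof (rule deriv_diff_ge[OF d that])
      fix \<tau> assume "a < \<tau>" "\<tau> < b"
      then have "\<tau> \<ge> 0" using that by simp
      then show "- K \<le> f' \<tau>" using b[of \<tau>] by (simp add: abs_le_iff)
    qed
    ultimately show ?thesis by (simp add: abs_le_iff)
  qed
  show ?thesis
  proof (cases "t1 \<le> t2")
    case True then show ?thesis using *[of t1 t2] t by (simp add: abs_minus_commute)
  next
    case False then show ?thesis using *[of t2 t1] t by simp
  qed
qed

lemma dist3: "dist (a :: state) b \<le> \<bar>fst a - fst b\<bar> + \<bar>fst (snd a) - fst (snd b)\<bar> + \<bar>snd (snd a) - snd (snd b)\<bar>"
proof -
  have nP: "norm (x::real, y::real, z::real) \<le> \<bar>x\<bar> + (\<bar>y\<bar> + \<bar>z\<bar>)" for x y z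
    using order_trans[OF norm_Pair_le add_left_mono[OF norm_Pair_le], of x y z] by simp
  obtain a1 a2 a3 where a: "a = (a1, a2, a3)" by (cases a) auto
  obtain b1 b2 b3 where b: "b = (b1, b2, b3)" by (cases b) auto
  have "dist a b = norm (a1 - b1, a2 - b2, a3 - b3)" unfolding a b dist_norm by simp
  also have "\<dots> \<le> \<bar>a1 - b1\<bar> + (\<bar>a2 - b2\<bar> + \<bar>a3 - b3\<bar>)" by (rule nP)
  finally show ?thesis unfolding a b by simp
qed

context sys begin

definition c2 where "c2 = a12 / a21"
definition c3 where "c3 = a13 / a31"

lemma c_pos: "c2 > 0" "c3 > 0" "c2 * a21 = a12" "c3 * a31 = a13"
  unfolding c2_def c3_def using pos by auto

definition Vf :: "real \<Rightarrow> real \<Rightarrow> real \<Rightarrow> state \<Rightarrow> real" where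
  "Vf p q s z = phi p (fst z) + c2 * phi q (fst (snd z)) + c3 * phi s (snd (snd z))"

definition admz :: "real \<Rightarrow> real \<Rightarrow> real \<Rightarrow> state \<Rightarrow> bool" where
  "admz p q s z \<longleftrightarrow> adm p (fst z) \<and> adm q (fst (snd z)) \<and> adm s (snd (snd z))"

definition eqc :: "real \<Rightarrow> real \<Rightarrow> real \<Rightarrow> bool" where
  "eqc p q s \<longleftrightarrow> p \<ge> 0 \<and> q > 0 \<and> s \<ge> 0 \<and> r2 * (1 - q) + a21 * p = 0
    \<and> r1 * (1 - p) - a12 * q - a13 * s \<le> 0 \<and> (p > 0 \<longrightarrow> r1 * (1 - p) - a12 * q - a13 * s = 0)
    \<and> a31 * p - mu \<le> 0 \<and> (s > 0 \<longrightarrow> a31 * p - mu = 0)"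

lemma sol_cont:
  assumes "ode_solution F x"
  shows "continuous_on {0..} x"
  using assms unfolding ode_solution_def continuous_on_eq_continuous_within
  using has_vector_derivative_continuous by blast

lemma sol_adm:
  assumes sol: "ode_solution F x" and a0: "admz p q s (x 0)" and t: "t \<ge> 0"
  shows "admz p q s (x t)"
proof -
  have c: "continuous_on {0..} x" by (rule sol_cont[OF sol])
  have cu: "continuous_on {0..} (\<lambda>t. fst (x t))" and cv: "continuous_on {0..} (\<lambda>t. fst (snd (x t)))"
    and cw: "continuous_on {0..} (\<lambda>t. snd (snd (x t)))"
    by (intro continuous_intros c)+
  have "continuous_on {0..} (\<lambda>t. r1 * (1 - fst (x t)) - a12 * fst (snd (x t)) - a13 * snd (snd (x t)))"
    by (intro continuous_intros cu cv cw)
  from sign_pres'[OF sol_derivs(1)[OF sol] this t]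
  have 1: "adm p (fst (x t))" using a0 unfolding admz_def adm_def by auto
  have "continuous_on {0..} (\<lambda>t. r2 * (1 - fst (snd (x t))) + a21 * fst (x t))"
    by (intro continuous_intros cu cv cw)
  from sign_pres'[OF sol_derivs(2)[OF sol] this t]
  have 2: "adm q (fst (snd (x t)))" using a0 unfolding admz_def adm_def by auto
  have "continuous_on {0..} (\<lambda>t. a31 * fst (x t) - mu)"
    by (intro continuous_intros cu cv cw)
  from sign_pres'[OF sol_derivs(3)[OF sol] this t]
  have 3: "adm s (snd (snd (x t)))" using a0 unfolding admz_def adm_def by auto
  show ?thesis using 1 2 3 unfolding admz_def by simp
qed

lemma Vd_ident:
  fixes u v w p q s :: real
  shows "(u - p) * (r1 * (1 - u) - (c2 * a21) * v - (c3 * a31) * w) + c2 * ((v - q) * (r2 * (1 - v) + a21 * u))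
      + c3 * ((w - s) * (a31 * u - mu))
    = - r1 * (u - p)^2 - c2 * r2 * (v - q)^2 + (u - p) * (r1 * (1 - p) - (c2 * a21) * q - (c3 * a31) * s)
      + c2 * ((v - q) * (r2 * (1 - q) + a21 * p)) + c3 * ((w - s) * (a31 * p - mu))"
  by (simp add: algebra_simps power2_eq_square)

definition Vd :: "real \<Rightarrow> real \<Rightarrow> real \<Rightarrow> state \<Rightarrow> real" where
  "Vd p q s z = (let u = fst z; v = fst (snd z); w = snd (snd z) in
     (u - p) * (r1 * (1 - u) - a12 * v - a13 * w) + c2 * ((v - q) * (r2 * (1 - v) + a21 * u))
      + c3 * ((w - s) * (a31 * u - mu)))"

lemma Vd_le:
  assumes e: "eqc p q s" and z: "admz p q s z"
  shows "Vd p q s z \<le> - r1 * (fst z - p)^2 - c2 * r2 * (fst (snd z) - q)^2 + c3 * ((snd (snd z) - s) * (a31 * p - mu))"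
proof -
  define u where "u = fst z" define v where "v = fst (snd z)" define w where "w = snd (snd z)"
  have "Vd p q s z = - r1 * (u - p)^2 - c2 * r2 * (v - q)^2 + (u - p) * (r1 * (1 - p) - a12 * q - a13 * s)
      + c2 * ((v - q) * (r2 * (1 - q) + a21 * p)) + c3 * ((w - s) * (a31 * p - mu))"
    unfolding Vd_def Let_def u_def[symmetric] v_def[symmetric] w_def[symmetric]
    using Vd_ident[of u p v w q s] unfolding c_pos(3,4) .
  moreover have "(u - p) * (r1 * (1 - p) - a12 * q - a13 * s) \<le> 0"
  proof (cases "p > 0")
    case True then show ?thesis using e unfolding eqc_def by simp
  next
    case False
    then have "p = 0" using e unfolding eqc_def by simp
    moreover have "u \<ge> 0" using z unfolding admz_def adm_def u_def by simp
    ultimately show ?thesis using e unfolding eqc_def by (simp add: mult_nonneg_nonpos)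
  qed
  moreover have "r2 * (1 - q) + a21 * p = 0" using e unfolding eqc_def by simp
  ultimately show ?thesis unfolding u_def v_def w_def by simp
qed

lemma Vd_le0:
  assumes e: "eqc p q s" and z: "admz p q s z"
  shows "Vd p q s z \<le> 0"
proof -
  have "c3 * ((snd (snd z) - s) * (a31 * p - mu)) \<le> 0"
  proof (cases "s > 0")
    case True then show ?thesis using e unfolding eqc_def by simp
  next
    case False
    then have "s = 0" using e unfolding eqc_def by simp
    moreover have "snd (snd z) \<ge> 0" using z unfolding admz_def adm_def by simp
    ultimately show ?thesis using e c_pos unfolding eqc_def
      by (simp add: mult_nonneg_nonpos)
  qed
  moreover have "r1 * (fst z - p)^2 \<ge> 0" "c2 * r2 * (fst (snd z) - q)^2 \<ge> 0" using pos c_pos by simp_all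
  ultimately show ?thesis using Vd_le[OF e z] by linarith
qed

lemma V_deriv:
  assumes e: "eqc p q s" and sol: "ode_solution F x" and a0: "admz p q s (x 0)" and t: "t \<ge> 0"
  shows "((\<lambda>t. Vf p q s (x t)) has_real_derivative Vd p q s (x t)) (at t within {0..})"
proof -
  have z: "admz p q s (x t)" by (rule sol_adm[OF sol a0 t])
  have ep: "p \<ge> 0" "q \<ge> 0" "s \<ge> 0" using e unfolding eqc_def by auto
  note d = sol_derivs[OF sol t]
  have du: "((\<lambda>t. phi p (fst (x t))) has_real_derivative (fst (x t) - p) * (r1 * (1 - fst (x t)) - a12 * fst (snd (x t)) - a13 * snd (snd (x t)))) (at t within {0..})"
    by (rule phi_deriv[OF ep(1) d(1)]) (use z in \<open>simp add: admz_def\<close>)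
  have dv: "((\<lambda>t. phi q (fst (snd (x t)))) has_real_derivative (fst (snd (x t)) - q) * (r2 * (1 - fst (snd (x t))) + a21 * fst (x t))) (at t within {0..})"
    by (rule phi_deriv[OF ep(2) d(2)]) (use z in \<open>simp add: admz_def\<close>)
  have dw: "((\<lambda>t. phi s (snd (snd (x t)))) has_real_derivative (snd (snd (x t)) - s) * (a31 * fst (x t) - mu)) (at t within {0..})"
    by (rule phi_deriv[OF ep(3) d(3)]) (use z in \<open>simp add: admz_def\<close>)
  have "((\<lambda>t. phi p (fst (x t)) + c2 * phi q (fst (snd (x t))) + c3 * phi s (snd (snd (x t)))) has_real_derivative
      (fst (x t) - p) * (r1 * (1 - fst (x t)) - a12 * fst (snd (x t)) - a13 * snd (snd (x t)))
      + c2 * ((fst (snd (x t)) - q) * (r2 * (1 - fst (snd (x t))) + a21 * fst (x t)))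
      + c3 * ((snd (snd (x t)) - s) * (a31 * fst (x t) - mu))) (at t within {0..})"
    by (intro DERIV_add DERIV_cmult du dv dw)
  then show ?thesis unfolding Vf_def Vd_def Let_def .
qed

lemma V_nonneg:
  assumes e: "eqc p q s" and z: "admz p q s z"
  shows "phi p (fst z) \<ge> 0" "phi q (fst (snd z)) \<ge> 0" "phi s (snd (snd z)) \<ge> 0" "Vf p q s z \<ge> 0"
proof -
  have ep: "p \<ge> 0" "q \<ge> 0" "s \<ge> 0" using e unfolding eqc_def by auto
  show 1: "phi p (fst z) \<ge> 0" "phi q (fst (snd z)) \<ge> 0" "phi s (snd (snd z)) \<ge> 0"
    using phi_nonneg ep z unfolding admz_def by auto
  then show "Vf p q s z \<ge> 0" unfolding Vf_def using c_pos by simp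
qed

lemma V_decr:
  assumes e: "eqc p q s" and sol: "ode_solution F x" and a0: "admz p q s (x 0)" and t: "0 \<le> t1" "t1 \<le> t2"
  shows "Vf p q s (x t2) \<le> Vf p q s (x t1)"
proof -
  have "Vf p q s (x t2) - Vf p q s (x t1) \<le> 0 * (t2 - t1)"
    by (rule deriv_diff_le[OF V_deriv[OF e sol a0] t])
       (use Vd_le0[OF e sol_adm[OF sol a0]] t in auto)
  then show ?thesis by simp
qed

lemma V_static:
  assumes e: "eqc p q s" and \<epsilon>: "\<epsilon> > 0"
  shows "\<exists>m>0. \<forall>z. admz p q s z \<longrightarrow> Vf p q s z < m \<longrightarrow> dist z (p, q, s) < \<epsilon>"
proof -
  have ep: "p \<ge> 0" "q \<ge> 0" "s \<ge> 0" using e unfolding eqc_def by auto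
  define \<rho> where "\<rho> = \<epsilon> / 3"
  have \<rho>: "\<rho> > 0" using \<epsilon> unfolding \<rho>_def by simp
  obtain m1 where m1: "m1 > 0" "\<And>x. adm p x \<Longrightarrow> phi p x < m1 \<Longrightarrow> \<bar>x - p\<bar> < \<rho>"
    using phi_sep[OF ep(1) \<rho>] by auto
  obtain m2 where m2: "m2 > 0" "\<And>x. adm q x \<Longrightarrow> phi q x < m2 \<Longrightarrow> \<bar>x - q\<bar> < \<rho>"
    using phi_sep[OF ep(2) \<rho>] by auto
  obtain m3 where m3: "m3 > 0" "\<And>x. adm s x \<Longrightarrow> phi s x < m3 \<Longrightarrow> \<bar>x - s\<bar> < \<rho>"
    using phi_sep[OF ep(3) \<rho>] by auto
  define m where "m = min m1 (min (c2 * m2) (c3 * m3))"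
  have m: "m > 0" unfolding m_def using m1 m2 m3 c_pos by simp
  have "dist z (p, q, s) < \<epsilon>" if z: "admz p q s z" "Vf p q s z < m" for z
  proof -
    note nn = V_nonneg[OF e z(1)]
    have "phi p (fst z) < m1" using z(2) nn c_pos unfolding Vf_def m_def by (smt (verit) mult_nonneg_nonneg)
    then have 1: "\<bar>fst z - p\<bar> < \<rho>" using m1 z unfolding admz_def by auto
    have "c2 * phi q (fst (snd z)) < c2 * m2" using z(2) nn c_pos unfolding Vf_def m_def by (smt (verit) mult_nonneg_nonneg)
    then have "phi q (fst (snd z)) < m2" using c_pos by simp
    then have 2: "\<bar>fst (snd z) - q\<bar> < \<rho>" using m2 z unfolding admz_def by auto
    have "c3 * phi s (snd (snd z)) < c3 * m3" using z(2) nn c_pos unfolding Vf_def m_def by (smt (verit) mult_nonneg_nonneg)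
    then have "phi s (snd (snd z)) < m3" using c_pos by simp
    then have 3: "\<bar>snd (snd z) - s\<bar> < \<rho>" using m3 z unfolding admz_def by auto
    show ?thesis using dist3[of z "(p, q, s)"] 1 2 3 unfolding \<rho>_def by simp
  qed
  then show ?thesis using m by blast
qed

lemma V_cont:
  assumes e: "eqc p q s"
  shows "isCont (Vf p q s) (p, q, s)"
proof -
  have ep: "p \<ge> 0" "q \<ge> 0" "s \<ge> 0" using e unfolding eqc_def by auto
  have 1: "isCont (\<lambda>z. phi p (fst z)) (p, q, s)"
    by (rule isCont_o2[where f=fst]) (auto intro: phi_cont[OF ep(1)])
  have 2: "isCont (\<lambda>z. phi q (fst (snd z))) (p, q, s)"
    by (rule isCont_o2[where f="\<lambda>z. fst (snd z)"]) (auto intro!: continuous_intros phi_cont[OF ep(2)])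
  have 3: "isCont (\<lambda>z. phi s (snd (snd z))) (p, q, s)"
    by (rule isCont_o2[where f="\<lambda>z. snd (snd z)"]) (auto intro!: continuous_intros phi_cont[OF ep(3)])
  show ?thesis unfolding Vf_def[abs_def] by (intro continuous_intros 1 2 3)
qed

lemma gen_stable:
  assumes e: "eqc p q s"
  shows "stable_in F orthant (p, q, s)"
  unfolding stable_in_def
proof (intro allI impI)
  fix \<epsilon> :: real assume \<epsilon>: "\<epsilon> > 0"
  obtain m where m: "m > 0" "\<And>z. admz p q s z \<Longrightarrow> Vf p q s z < m \<Longrightarrow> dist z (p, q, s) < \<epsilon>"
    using V_static[OF e \<epsilon>] by auto
  have V0: "Vf p q s (p, q, s) = 0" unfolding Vf_def by (simp add: phi_at)
  obtain \<delta>1 where d1: "\<delta>1 > 0" "\<And>z. dist z (p, q, s) < \<delta>1 \<Longrightarrow> dist (Vf p q s z) (Vf p q s (p, q, s)) < m"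
    using V_cont[OF e] m(1) unfolding continuous_at_eps_delta by blast
  define \<delta> where "\<delta> = min \<delta>1 (min (if p > 0 then p else 1) (min q (if s > 0 then s else 1)))"
  have d: "\<delta> > 0" unfolding \<delta>_def using d1 e unfolding eqc_def by auto
  have "\<forall>t\<ge>0. dist (x t) (p, q, s) < \<epsilon>" if x: "ode_solution F x" "x 0 \<in> orthant" "dist (x 0) (p, q, s) < \<delta>" for x
  proof -
    have du: "\<bar>fst (x 0) - p\<bar> < \<delta>" "\<bar>fst (snd (x 0)) - q\<bar> < \<delta>" "\<bar>snd (snd (x 0)) - s\<bar> < \<delta>"
      using dist_u_le[of "x 0" "(p, q, s)"] dist_v_le[of "x 0" "(p, q, s)"] dist_w_le[of "x 0" "(p, q, s)"] x(3) by auto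
    have o: "fst (x 0) \<ge> 0" "fst (snd (x 0)) \<ge> 0" "snd (snd (x 0)) \<ge> 0"
      using x(2) unfolding orthant_def by (auto simp: case_prod_beta)
    have a0: "admz p q s (x 0)" unfolding admz_def adm_def
      using o du unfolding \<delta>_def by (auto split: if_splits simp: abs_less_iff)
    have "Vf p q s (x 0) < m" using d1(2)[of "x 0"] x(3) V0 unfolding \<delta>_def by (simp add: dist_real_def)
    then show ?thesis
      using V_decr[OF e x(1) a0] m(2) sol_adm[OF x(1) a0] by (meson le_less_trans order_refl)
  qed
  then show "\<exists>\<delta>>0. \<forall>x. ode_solution F x \<and> x 0 \<in> orthant \<and> dist (x 0) (p, q, s) < \<delta> \<longrightarrow>
      (\<forall>t\<ge>0. dist (x t) (p, q, s) < \<epsilon>)" using d by blast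
qed

end

lemma abs_prod_le: "\<bar>x\<bar> \<le> X \<Longrightarrow> \<bar>y\<bar> \<le> Y \<Longrightarrow> \<bar>(x::real) * y\<bar> \<le> X * Y"
  by (simp add: abs_mult mult_mono')

context sys begin

lemma last_le:
  assumes e: "eqc p q s" and z: "admz p q s z"
  shows "c3 * ((snd (snd z) - s) * (a31 * p - mu)) \<le> 0"
proof (cases "s > 0")
  case True then show ?thesis using e unfolding eqc_def by simp
next
  case False
  then have "s = 0" using e unfolding eqc_def by simp
  moreover have "snd (snd z) \<ge> 0" using z unfolding admz_def adm_def by simp
  ultimately show ?thesis using e c_pos unfolding eqc_def
    by (simp add: mult_nonneg_nonpos)
qed

lemma gen_conv:
  assumes e: "eqc p q s" and cond: "(s = 0 \<and> a31 * p - mu < 0) \<or> (s > 0 \<and> p > 0)"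
    and sol: "ode_solution F x" and a0: "admz p q s (x 0)"
  shows "(x \<longlongrightarrow> (p, q, s)) at_top"
proof -
  define u where "u t = fst (x t)" for t
  define v where "v t = fst (snd (x t))" for t
  define w where "w t = snd (snd (x t))" for t
  have ueq: "(\<lambda>t. fst (x t)) = u" and veq: "(\<lambda>t. fst (snd (x t))) = v" and weq: "(\<lambda>t. snd (snd (x t))) = w"
    by (auto simp: u_def v_def w_def fun_eq_iff)
  have xeq: "x = (\<lambda>t. (u t, v t, w t))" by (auto simp: u_def v_def w_def fun_eq_iff)
  have ep: "p \<ge> 0" "q > 0" "s \<ge> 0" using e unfolding eqc_def by auto
  have ad: "admz p q s (x t)" if "t \<ge> 0" for t by (rule sol_adm[OF sol a0 that])
  have nn: "u t \<ge> 0" "v t > 0" "w t \<ge> 0" if "t \<ge> 0" for t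
    using ad[OF that] ep unfolding admz_def adm_def u_def v_def w_def by auto
  define V0 where "V0 = Vf p q s (x 0)"
  have Vle: "Vf p q s (x t) \<le> V0" if "t \<ge> 0" for t
    unfolding V0_def by (rule V_decr[OF e sol a0]) (use that in auto)
  have bphi: "phi p (u t) \<le> V0" "c2 * phi q (v t) \<le> V0" "c3 * phi s (w t) \<le> V0" if "t \<ge> 0" for t
  proof -
    note n = V_nonneg[OF e ad[OF that]]
    have "c2 * phi q (v t) \<ge> 0" "c3 * phi s (w t) \<ge> 0" using n c_pos unfolding v_def w_def by simp_all
    then show "phi p (u t) \<le> V0" "c2 * phi q (v t) \<le> V0" "c3 * phi s (w t) \<le> V0"
      using Vle[OF that] n(1) unfolding Vf_def u_def v_def w_def by linarith+
  qed
  define Ub where "Ub = 2 * (V0 + p)"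
  define Vb where "Vb = 2 * (V0 / c2 + q)"
  define Wb where "Wb = 2 * (V0 / c3 + s)"
  have ub: "u t \<le> Ub" "v t \<le> Vb" "w t \<le> Wb" if "t \<ge> 0" for t
  proof -
    have a: "adm p (u t)" "adm q (v t)" "adm s (w t)" using ad[OF that] unfolding admz_def u_def v_def w_def by auto
    have "2 * (phi p (u t) + p) \<le> 2 * (V0 + p)" using bphi(1)[OF that] by simp
    then show "u t \<le> Ub" using phi_bound[OF ep(1) a(1)] unfolding Ub_def by linarith
    have "phi q (v t) \<le> V0 / c2" using bphi(2)[OF that] c_pos by (simp add: field_simps)
    then have "2 * (phi q (v t) + q) \<le> 2 * (V0 / c2 + q)" by simp
    then show "v t \<le> Vb" using phi_bound[of q "v t"] ep a unfolding Vb_def by linarith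
    have "phi s (w t) \<le> V0 / c3" using bphi(3)[OF that] c_pos by (simp add: field_simps)
    then have "2 * (phi s (w t) + s) \<le> 2 * (V0 / c3 + s)" by simp
    then show "w t \<le> Wb" using phi_bound[of s "w t"] ep a unfolding Wb_def by linarith
  qed
  have Wb0: "Wb \<ge> 0" using ub(3)[of 0] nn(3)[of 0] by simp
  have Ub0: "Ub \<ge> 0" using ub(1)[of 0] nn(1)[of 0] by simp
  have Vb0: "Vb \<ge> 0" using ub(2)[of 0] nn(2)[of 0] by simp
  have sd1: "(u has_real_derivative u t * (r1 * (1 - u t) - a12 * v t - a13 * w t)) (at t within {0..})"
    and sd2: "(v has_real_derivative v t * (r2 * (1 - v t) + a21 * u t)) (at t within {0..})"
    and sd3: "(w has_real_derivative w t * (a31 * u t - mu)) (at t within {0..})" if "t \<ge> 0" for t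
    using sol_derivs[OF sol that] by (simp_all add: u_def[abs_def] v_def[abs_def] w_def[abs_def])
  note sd = sd1 sd2 sd3
  define Ku where "Ku = Ub * (r1 * (1 + Ub) + a12 * Vb + a13 * Wb) + 1"
  define Kv where "Kv = Vb * (r2 * (1 + Vb) + a21 * Ub) + 1"
  define Kw where "Kw = Wb * (a31 * Ub + mu) + 1"
  have Kpos: "Ku > 0" "Kv > 0" "Kw > 0" unfolding Ku_def Kv_def Kw_def
    using Ub0 Vb0 Wb0 pos by (intro add_nonneg_pos mult_nonneg_nonneg add_nonneg_nonneg; simp)+
  have lu: "\<bar>u t1 - u t2\<bar> \<le> Ku * \<bar>t1 - t2\<bar>" if "t1 \<ge> 0" "t2 \<ge> 0" for t1 t2
  proof (rule lip_from_deriv[OF sd(1) _ that])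
    fix t :: real assume t: "t \<ge> 0"
    have "\<bar>r1 * (1 - u t) - a12 * v t - a13 * w t\<bar> \<le> r1 * (1 + Ub) + a12 * Vb + a13 * Wb"
    proof -
      have "\<bar>r1 * (1 - u t)\<bar> \<le> r1 * (1 + Ub)" using nn[OF t] ub[OF t] pos by (simp add: abs_mult)
      moreover have "\<bar>a12 * v t\<bar> \<le> a12 * Vb" using nn[OF t] ub[OF t] pos by (simp add: abs_mult)
      moreover have "\<bar>a13 * w t\<bar> \<le> a13 * Wb" using nn[OF t] ub[OF t] pos by (simp add: abs_mult)
      ultimately show ?thesis by linarith
    qed
    moreover have "\<bar>u t\<bar> \<le> Ub" using nn[OF t] ub[OF t] by simp
    ultimately have "\<bar>u t * (r1 * (1 - u t) - a12 * v t - a13 * w t)\<bar> \<le> Ub * (r1 * (1 + Ub) + a12 * Vb + a13 * Wb)"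
      by (metis abs_prod_le)
    then show "\<bar>u t * (r1 * (1 - u t) - a12 * v t - a13 * w t)\<bar> \<le> Ku" unfolding Ku_def by linarith
  qed
  have lv: "\<bar>v t1 - v t2\<bar> \<le> Kv * \<bar>t1 - t2\<bar>" if "t1 \<ge> 0" "t2 \<ge> 0" for t1 t2
  proof (rule lip_from_deriv[OF sd(2) _ that])
    fix t :: real assume t: "t \<ge> 0"
    have "\<bar>r2 * (1 - v t) + a21 * u t\<bar> \<le> r2 * (1 + Vb) + a21 * Ub"
    proof -
      have "\<bar>r2 * (1 - v t)\<bar> \<le> r2 * (1 + Vb)" using nn[OF t] ub[OF t] pos by (simp add: abs_mult)
      moreover have "\<bar>a21 * u t\<bar> \<le> a21 * Ub" using nn[OF t] ub[OF t] pos by (simp add: abs_mult)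
      ultimately show ?thesis by linarith
    qed
    moreover have "\<bar>v t\<bar> \<le> Vb" using nn[OF t] ub[OF t] by simp
    ultimately have "\<bar>v t * (r2 * (1 - v t) + a21 * u t)\<bar> \<le> Vb * (r2 * (1 + Vb) + a21 * Ub)"
      by (metis abs_prod_le)
    then show "\<bar>v t * (r2 * (1 - v t) + a21 * u t)\<bar> \<le> Kv" unfolding Kv_def by linarith
  qed
  have lw: "\<bar>w t1 - w t2\<bar> \<le> Kw * \<bar>t1 - t2\<bar>" if "t1 \<ge> 0" "t2 \<ge> 0" for t1 t2
  proof (rule lip_from_deriv[OF sd(3) _ that])
    fix t :: real assume t: "t \<ge> 0"
    have "\<bar>a31 * u t - mu\<bar> \<le> a31 * Ub + mu"
    proof -
      have "\<bar>a31 * u t\<bar> \<le> a31 * Ub" using nn[OF t] ub[OF t] pos by (simp add: abs_mult)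
      then show ?thesis using pos by linarith
    qed
    moreover have "\<bar>w t\<bar> \<le> Wb" using nn[OF t] ub[OF t] by simp
    ultimately have "\<bar>w t * (a31 * u t - mu)\<bar> \<le> Wb * (a31 * Ub + mu)"
      by (metis abs_prod_le)
    then show "\<bar>w t * (a31 * u t - mu)\<bar> \<le> Kw" unfolding Kw_def by linarith
  qed
  define V where "V t = Vf p q s (x t)" for t
  define V' where "V' t = Vd p q s (x t)" for t
  have dV: "(V has_real_derivative V' t) (at t within {0..})" if "t \<ge> 0" for t
    unfolding V_def[abs_def] V'_def using V_deriv[OF e sol a0 that] .
  have Vnn: "V t \<ge> 0" if "t \<ge> 0" for t unfolding V_def using V_nonneg[OF e ad[OF that]] by simp
  have V'b: "V' t \<le> - r1 * (u t - p)^2 - c2 * r2 * (v t - q)^2 + c3 * ((w t - s) * (a31 * p - mu))"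
    "c3 * ((w t - s) * (a31 * p - mu)) \<le> 0" if "t \<ge> 0" for t
    using Vd_le[OF e ad[OF that]] last_le[OF e ad[OF that]] unfolding V'_def u_def v_def w_def by auto
  have uc: "(u \<longlongrightarrow> p) at_top"
  proof (rule barbalat[OF dV Vnn _ _ Kpos(1) lu])
    fix t :: real assume t: "t \<ge> 0"
    have "c2 * r2 * (v t - q)^2 \<ge> 0" using c_pos pos by simp
    then show "V' t \<le> - r1 * (u t - p)^2" using V'b[OF t] by linarith
  qed (use pos in auto)
  have vc: "(v \<longlongrightarrow> q) at_top"
  proof (rule barbalat[OF dV Vnn _ _ Kpos(2) lv])
    fix t :: real assume t: "t \<ge> 0"
    have "r1 * (u t - p)^2 \<ge> 0" using c_pos pos by simp
    moreover have "- (c2 * r2) * (v t - q)^2 = - c2 * r2 * (v t - q)^2" by simp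
    ultimately show "V' t \<le> - (c2 * r2) * (v t - q)^2" using V'b[OF t] by linarith
  qed (use pos c_pos in auto)
  have wc: "(w \<longlongrightarrow> s) at_top"
    using cond
  proof
    assume c: "s = 0 \<and> a31 * p - mu < 0"
    define k where "k = c3 * (mu - a31 * p)"
    have k: "k > 0" unfolding k_def using c c_pos by simp
    show ?thesis
    proof (rule barbalat[OF dV Vnn _ _ Kpos(3) lw])
      show "k / (Wb + 1) > 0" using k Wb0 by simp
      fix t :: real assume t: "t \<ge> 0"
      have "w t * w t \<le> (Wb + 1) * w t" using nn[OF t] ub[OF t] by (intro mult_right_mono) auto
      then have "w t * w t / (Wb + 1) \<le> w t" using Wb0 by (simp add: field_simps)
      then have "k * (w t * w t / (Wb + 1)) \<le> k * w t" using k by (intro mult_left_mono) auto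
      moreover have "c3 * ((w t - s) * (a31 * p - mu)) = - k * w t" using c unfolding k_def by (simp add: algebra_simps)
      moreover have "r1 * (u t - p)^2 \<ge> 0" "c2 * r2 * (v t - q)^2 \<ge> 0" using c_pos pos by simp_all
      ultimately show "V' t \<le> - (k / (Wb + 1)) * (w t - s)^2"
        using V'b(1)[OF t] c by (simp add: power2_eq_square)
    qed
  next
    assume c: "s > 0 \<and> p > 0"
    have Cz: "a31 * p - mu = 0" and Az: "r1 * (1 - p) - a12 * q - a13 * s = 0"
      using e c unfolding eqc_def by auto
    have upos: "u t > 0" if "t \<ge> 0" for t using ad[OF that] c unfolding admz_def adm_def u_def by auto
    define l where "l t = ln (u t)" for t
    define A where "A t = - r1 * (u t - p) - a12 * (v t - q) - a13 * (w t - s)" for t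
    have dl: "(l has_real_derivative A t) (at t within {0..})" if t: "t \<ge> 0" for t
    proof -
      have "(l has_real_derivative (u t * (r1 * (1 - u t) - a12 * v t - a13 * w t)) / u t) (at t within {0..})"
        unfolding l_def[abs_def] using sd(1)[OF t] upos[OF t] by (auto intro!: derivative_eq_intros)
      moreover have "(u t * (r1 * (1 - u t) - a12 * v t - a13 * w t)) / u t = A t"
      proof -
        have "(u t * (r1 * (1 - u t) - a12 * v t - a13 * w t)) / u t = r1 * (1 - u t) - a12 * v t - a13 * w t"
          using upos[OF t] by simp
        moreover have "r1 * (1 - u t) - a12 * v t - a13 * w t - A t = r1 * (1 - p) - a12 * q - a13 * s"
          unfolding A_def by (simp add: algebra_simps)
        ultimately show ?thesis using Az by linarith
      qed
      ultimately show ?thesis by simp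
    qed
    have dw: "(w has_real_derivative w t * a31 * (u t - p)) (at t within {0..})" if t: "t \<ge> 0" for t
    proof -
      have "w t * (a31 * u t - mu) = w t * a31 * (u t - p)" using Cz by (simp add: algebra_simps)
      then show ?thesis using sd(3)[OF t] by metis
    qed
    have lc: "(l \<longlongrightarrow> ln p) at_top" unfolding l_def[abs_def] using uc c by (intro tendsto_ln) auto
    show ?thesis unfolding tendsto_iff eventually_at_top_linorder dist_real_def
    proof (intro allI impI)
      fix \<eta> :: real assume eta: "\<eta> > 0"
      define \<kappa> where "\<kappa> = a13 * \<eta> / 4"
      have ka: "\<kappa> > 0" unfolding \<kappa>_def using eta pos by simp
      define K' where "K' = (Wb + 1) * a31"
      have K': "K' > 0" unfolding K'_def using Wb0 pos by simp
      define e1 where "e1 = min (\<kappa> / (2 * r1)) (\<eta> / (2 * K'))"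
      have e1: "e1 > 0" unfolding e1_def using ka eta pos K' by simp
      obtain N1 where N1: "\<And>t. t \<ge> N1 \<Longrightarrow> \<bar>u t - p\<bar> < e1"
        using uc e1 unfolding tendsto_iff eventually_at_top_linorder dist_real_def by blast
      obtain N2 where N2: "\<And>t. t \<ge> N2 \<Longrightarrow> \<bar>v t - q\<bar> < \<kappa> / (2 * a12)"
        using vc ka pos unfolding tendsto_iff eventually_at_top_linorder dist_real_def
        by (metis divide_pos_pos mult_pos_pos zero_less_numeral)
      obtain N3 where N3: "\<And>t. t \<ge> N3 \<Longrightarrow> \<bar>l t - ln p\<bar> < \<kappa> / 2"
        using lc ka unfolding tendsto_iff eventually_at_top_linorder dist_real_def
        by (metis half_gt_zero)
      define N where "N = max 0 (max N1 (max N2 N3))"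
      have wd: "\<bar>w t * a31 * (u t - p)\<bar> \<le> \<eta> / 2" if t: "t \<ge> N" for t
      proof -
        have t0: "t \<ge> 0" using t unfolding N_def by simp
        have "\<bar>w t * a31 * (u t - p)\<bar> = w t * a31 * \<bar>u t - p\<bar>" using nn[OF t0] pos by (simp add: abs_mult)
        also have "\<dots> \<le> (Wb + 1) * a31 * (\<eta> / (2 * K'))"
        proof (intro mult_mono)
          show "w t \<le> Wb + 1" using ub[OF t0] by simp
          show "\<bar>u t - p\<bar> \<le> \<eta> / (2 * K')" using N1[of t] t unfolding N_def e1_def by simp
        qed (use nn[OF t0] pos Wb0 eta K' in auto)
        also have "\<dots> = K' * (\<eta> / (2 * K'))" unfolding K'_def by simp
        also have "\<dots> = \<eta> / 2" using K' by simp
        finally show ?thesis .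
      qed
      have Ab: "\<bar>A t + a13 * (w t - s)\<bar> < \<kappa>" if t: "t \<ge> N" for t
      proof -
        have "\<bar>u t - p\<bar> < \<kappa> / (2 * r1)" using N1[of t] t unfolding N_def e1_def by simp
        then have "r1 * \<bar>u t - p\<bar> < \<kappa> / 2" using pos by (simp add: field_simps)
        moreover have "\<bar>v t - q\<bar> < \<kappa> / (2 * a12)" using N2[of t] t unfolding N_def by simp
        then have "a12 * \<bar>v t - q\<bar> < \<kappa> / 2" using pos by (simp add: field_simps)
        moreover have "A t + a13 * (w t - s) = - r1 * (u t - p) - a12 * (v t - q)" unfolding A_def by simp
        moreover have "\<bar>r1 * (u t - p)\<bar> = r1 * \<bar>u t - p\<bar>" "\<bar>a12 * (v t - q)\<bar> = a12 * \<bar>v t - q\<bar>"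
          using pos by (simp_all add: abs_mult)
        ultimately show ?thesis by linarith
      qed
      have lt: "\<bar>l (t + 1) - l t\<bar> < \<kappa>" if t: "t \<ge> N" for t
      proof -
        have "\<bar>l t - ln p\<bar> < \<kappa> / 2" "\<bar>l (t + 1) - ln p\<bar> < \<kappa> / 2"
          using N3[of t] N3[of "t + 1"] t unfolding N_def by auto
        then show ?thesis by linarith
      qed
      have "\<bar>w t - s\<bar> < \<eta>" if t: "t \<ge> N" for t
      proof (rule ccontr)
        assume "\<not> \<bar>w t - s\<bar> < \<eta>"
        then have "w t - s \<ge> \<eta> \<or> w t - s \<le> - \<eta>" by linarith
        moreover have t0: "t \<ge> 0" using t unfolding N_def by simp
        moreover {
          assume h: "w t - s \<ge> \<eta>"
          have wbig: "w \<tau> - s \<ge> \<eta> / 2" if "t \<le> \<tau>" "\<tau> \<le> t + 1" for \<tau>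
          proof -
            have "w \<tau> - w t \<ge> (- (\<eta> / 2)) * (\<tau> - t)"
            proof (rule deriv_diff_ge[OF dw])
              fix \<sigma> assume "t < \<sigma>" "\<sigma> < \<tau>"
              then show "- (\<eta> / 2) \<le> w \<sigma> * a31 * (u \<sigma> - p)" using wd[of \<sigma>] t by (simp add: abs_le_iff)
            qed (use t0 that in auto)
            moreover have "(\<eta> / 2) * (\<tau> - t) \<le> (\<eta> / 2) * 1" using that eta by (intro mult_left_mono) auto
            ultimately show ?thesis using h by simp
          qed
          have "l (t + 1) - l t \<le> (- \<kappa>) * ((t + 1) - t)"
          proof (rule deriv_diff_le[OF dl])
            fix \<sigma> assume s: "t < \<sigma>" "\<sigma> < t + 1"
            have "a13 * (w \<sigma> - s) \<ge> a13 * (\<eta> / 2)" using wbig[of \<sigma>] s pos by (intro mult_left_mono) auto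
            moreover have "a13 * (\<eta> / 2) = 2 * \<kappa>" unfolding \<kappa>_def by simp
            ultimately show "A \<sigma> \<le> - \<kappa>" using Ab[of \<sigma>] s t by (simp add: abs_less_iff)
          qed (use t0 in auto)
          then have False using lt[OF t] by (simp add: abs_less_iff) }
        moreover {
          assume h: "w t - s \<le> - \<eta>"
          have wsmall: "w \<tau> - s \<le> - \<eta> / 2" if "t \<le> \<tau>" "\<tau> \<le> t + 1" for \<tau>
          proof -
            have "w \<tau> - w t \<le> (\<eta> / 2) * (\<tau> - t)"
            proof (rule deriv_diff_le[OF dw])
              fix \<sigma> assume "t < \<sigma>" "\<sigma> < \<tau>"
              then show "w \<sigma> * a31 * (u \<sigma> - p) \<le> \<eta> / 2" using wd[of \<sigma>] t by (simp add: abs_le_iff)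
            qed (use t0 that in auto)
            moreover have "(\<eta> / 2) * (\<tau> - t) \<le> (\<eta> / 2) * 1" using that eta by (intro mult_left_mono) auto
            ultimately show ?thesis using h by simp
          qed
          have "l (t + 1) - l t \<ge> \<kappa> * ((t + 1) - t)"
          proof (rule deriv_diff_ge[OF dl])
            fix \<sigma> assume s: "t < \<sigma>" "\<sigma> < t + 1"
            have "a13 * (w \<sigma> - s) \<le> a13 * (- \<eta> / 2)" using wsmall[of \<sigma>] s pos by (intro mult_left_mono) auto
            moreover have "a13 * (- \<eta> / 2) = - 2 * \<kappa>" unfolding \<kappa>_def by simp
            ultimately show "\<kappa> \<le> A \<sigma>" using Ab[of \<sigma>] s t by (simp add: abs_less_iff)
          qed (use t0 in auto)
          then have False using lt[OF t] by (simp add: abs_less_iff) }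
        ultimately show False by blast
      qed
      then show "\<exists>N. \<forall>t\<ge>N. \<bar>w t - s\<bar> < \<eta>" by blast
    qed
  qed
  show ?thesis unfolding xeq by (intro tendsto_Pair uc vc wc)
qed

end

context sys begin

lemma gen_las:
  assumes e: "eqc p q s" and cond: "(s = 0 \<and> a31 * p - mu < 0) \<or> (s > 0 \<and> p > 0)" and p: "p > 0"
  shows "loc_asym_stable_in F orthant (p, q, s)"
  unfolding loc_asym_stable_in_def
proof (intro conjI gen_stable[OF e])
  define \<eta> where "\<eta> = min p (min q (if s > 0 then s else 1))"
  have eta: "\<eta> > 0" unfolding \<eta>_def using p e unfolding eqc_def by auto
  have "(x \<longlongrightarrow> (p, q, s)) at_top" if x: "ode_solution F x" "x 0 \<in> orthant" "dist (x 0) (p, q, s) < \<eta>" for x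
  proof -
    have du: "\<bar>fst (x 0) - p\<bar> < \<eta>" "\<bar>fst (snd (x 0)) - q\<bar> < \<eta>" "\<bar>snd (snd (x 0)) - s\<bar> < \<eta>"
      using dist_u_le[of "x 0" "(p, q, s)"] dist_v_le[of "x 0" "(p, q, s)"] dist_w_le[of "x 0" "(p, q, s)"] x(3) by auto
    have o: "fst (x 0) \<ge> 0" "fst (snd (x 0)) \<ge> 0" "snd (snd (x 0)) \<ge> 0"
      using x(2) unfolding orthant_def by (auto simp: case_prod_beta)
    have a0: "admz p q s (x 0)" unfolding admz_def adm_def
      using o du unfolding \<eta>_def by (auto split: if_splits simp: abs_less_iff)
    show ?thesis by (rule gen_conv[OF e cond x(1) a0])
  qed
  then show "\<exists>\<eta>>0. \<forall>x. ode_solution F x \<and> x 0 \<in> orthant \<and> dist (x 0) (p, q, s) < \<eta> \<longrightarrow> (x \<longlongrightarrow> (p, q, s)) at_top"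
    using eta by blast
qed

end

theorem proposition1:
  fixes r1 r2 a12 a13 a21 a31 mu :: real
  assumes pos: "r1 > 0" "r2 > 0" "a12 > 0" "a13 > 0" "a21 > 0" "a31 > 0" "mu > 0"
  defines "F \<equiv> field r1 r2 a12 a13 a21 a31 mu"
      and "u12 \<equiv> r2 * (r1 - a12) / (r1 * r2 + a12 * a21)"
      and "v12 \<equiv> (r1 * r2 + r1 * a21) / (r1 * r2 + a12 * a21)"
      and "E13 \<equiv> (mu / a31, 0, r1 * (a31 - mu) / (a13 * a31))"
      and "Estar \<equiv> (mu / a31, 1 + a21 * mu / (a31 * r2),
                   (r1 * r2 * a31 - r1 * r2 * mu - a12 * a31 * r2 - a12 * a21 * mu) / (a13 * a31 * r2))"
  shows "unstable_in F orthant (0, 0, 0)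
       \<and> unstable_in F orthant (1, 0, 0)
       \<and> (r1 \<le> a12 \<longrightarrow> glob_asym_stable_in F orthant pos_orthant (0, 1, 0))
       \<and> (r1 > a12 \<and> mu > a31 * u12 \<longrightarrow> loc_asym_stable_in F orthant (u12, v12, 0))
       \<and> (a31 > mu \<longrightarrow> unstable_in F orthant E13)
       \<and> (r1 * r2 * a31 - r1 * r2 * mu - a12 * a31 * r2 - a12 * a21 * mu > 0 \<longrightarrow>
           Estar \<in> pos_orthant \<and> is_equilibrium F Estar \<and> loc_asym_stable_in F orthant Estar)"
proof -
  interpret sys r1 r2 a12 a13 a21 a31 mu using pos by unfold_locales
  have i: "unstable_in F orthant (0, 0, 0)" unfolding F_def by (rule unstable_v) auto
  have ii: "unstable_in F orthant (1, 0, 0)" unfolding F_def by (rule unstable_v) auto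
  have iii: "glob_asym_stable_in F orthant pos_orthant (0, 1, 0)" if h: "r1 \<le> a12"
  proof -
    have e: "eqc 0 1 0" unfolding eqc_def using h pos by simp
    have c: "(0 = (0::real) \<and> a31 * 0 - mu < 0) \<or> (0 > (0::real) \<and> 0 > (0::real))" using pos by simp
    show ?thesis unfolding glob_asym_stable_in_def F_def
    proof (intro conjI gen_stable[OF e] allI impI)
      fix x assume x: "ode_solution (field r1 r2 a12 a13 a21 a31 mu) x \<and> x 0 \<in> pos_orthant"
      have a0: "admz 0 1 0 (x 0)" using x unfolding pos_orthant_def admz_def adm_def
        by (auto simp: case_prod_beta)
      show "(x \<longlongrightarrow> (0, 1, 0)) at_top" by (rule gen_conv[OF e c conjunct1[OF x] a0])
    qed
  qed
  have iv: "loc_asym_stable_in F orthant (u12, v12, 0)" if h: "r1 > a12 \<and> mu > a31 * u12"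
  proof -
    define D where "D = r1 * r2 + a12 * a21"
    have D: "D > 0" unfolding D_def using pos by (simp add: add_pos_pos)
    have u12: "u12 = r2 * (r1 - a12) / D" and v12: "v12 = (r1 * r2 + r1 * a21) / D"
      unfolding u12_def v12_def D_def by simp_all
    have up: "u12 > 0" unfolding u12 using h pos D by simp
    have vp: "v12 > 0" unfolding v12 using pos D by (simp add: add_pos_pos)
    have B: "r2 * (1 - v12) + a21 * u12 = 0"
    proof -
      have "r2 * (1 - v12) + a21 * u12 = (r2 * (D - (r1 * r2 + r1 * a21)) + a21 * (r2 * (r1 - a12))) / D"
        unfolding u12 v12 using D by (simp add: field_simps)
      also have "\<dots> = 0" unfolding D_def by (simp add: algebra_simps)
      finally show ?thesis .
    qed
    have A: "r1 * (1 - u12) - a12 * v12 - a13 * 0 = 0"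
    proof -
      have "r1 * (1 - u12) - a12 * v12 = (r1 * (D - r2 * (r1 - a12)) - a12 * (r1 * r2 + r1 * a21)) / D"
        unfolding u12 v12 using D by (simp add: field_simps)
      also have "\<dots> = 0" unfolding D_def by (simp add: algebra_simps)
      finally show ?thesis by simp
    qed
    have e: "eqc u12 v12 0" unfolding eqc_def using up vp B A h by simp
    have c: "(0 = (0::real) \<and> a31 * u12 - mu < 0) \<or> (0 > (0::real) \<and> u12 > 0)" using h by simp
    show ?thesis unfolding F_def by (rule gen_las[OF e c up])
  qed
  have v: "unstable_in F orthant E13" if h: "a31 > mu"
    unfolding F_def E13_def by (rule unstable_v) (use h pos in auto)
  have vi: "Estar \<in> pos_orthant \<and> is_equilibrium F Estar \<and> loc_asym_stable_in F orthant Estar"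
    if h: "r1 * r2 * a31 - r1 * r2 * mu - a12 * a31 * r2 - a12 * a21 * mu > 0"
  proof -
    define W where "W = r1 * r2 * a31 - r1 * r2 * mu - a12 * a31 * r2 - a12 * a21 * mu"
    define p where "p = mu / a31"
    define q where "q = 1 + a21 * mu / (a31 * r2)"
    define s where "s = W / (a13 * a31 * r2)"
    have Es: "Estar = (p, q, s)" unfolding Estar_def p_def q_def s_def W_def by simp
    have pp: "p > 0" "q > 0" "s > 0" unfolding p_def q_def s_def using pos h W_def
      by (simp_all add: add_pos_pos)
    have C: "a31 * p - mu = 0" unfolding p_def using pos by simp
    have B: "r2 * (1 - q) + a21 * p = 0" unfolding p_def q_def using pos by (simp add: field_simps)
    have A: "r1 * (1 - p) - a12 * q - a13 * s = 0"
    proof -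
      have "r1 * (1 - p) - a12 * q - a13 * s = (r1 * (a31 * r2 - mu * r2) - a12 * (a31 * r2 + a21 * mu) - W) / (a31 * r2)"
        unfolding p_def q_def s_def using pos by (simp add: field_simps)
      also have "\<dots> = 0" unfolding W_def by (simp add: algebra_simps)
      finally show ?thesis .
    qed
    have e: "eqc p q s" unfolding eqc_def using pp A B C by simp
    have c: "(s = 0 \<and> a31 * p - mu < 0) \<or> (s > 0 \<and> p > 0)" using pp by simp
    have "F Estar = 0" unfolding Es F_def field_def
    proof -
      have "r1 * p * (1 - p) - a12 * p * q - a13 * p * s = p * (r1 * (1 - p) - a12 * q - a13 * s)" by (simp add: algebra_simps)
      moreover have "r2 * q * (1 - q) + a21 * p * q = q * (r2 * (1 - q) + a21 * p)" by (simp add: algebra_simps)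
      moreover have "- mu * s + a31 * p * s = s * (a31 * p - mu)" by (simp add: algebra_simps)
      ultimately show "(case (p, q, s) of (u, v, w) \<Rightarrow> (r1 * u * (1 - u) - a12 * u * v - a13 * u * w, r2 * v * (1 - v) + a21 * u * v, - mu * w + a31 * u * w)) = 0"
        using A B C by (simp add: zero_prod_def)
    qed
    then show ?thesis unfolding is_equilibrium_def Es pos_orthant_def F_def
      using pp gen_las[OF e c pp(1)] by simp
  qed
  show ?thesis using i ii iii iv v vi by blast
qed

end
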